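(* Let $\kappa=\frac{\tilde\kappa\sqrt\delta}{\varepsilon}$ with $\tilde\kappa>\frac1\pi$ independent of $\varepsilon$, and assume $\varepsilon^2=o_\varepsilon(\delta)$ and $\delta=o_\varepsilon(\varepsilon)$. Let $(v_\varepsilon,\varphi_\varepsilon)$ be a minimizer of $G_{\varepsilon,\delta,\kappa}$ in $\mathcal I$ with $v_\varepsilon\ge0$, and let $\beta=\varepsilon/\sqrt\delta$. Then $$G_{\varepsilon,\delta,\kappa}(v_\varepsilon,\varphi_\varepsilon)=G_{\varepsilon,\delta,\kappa}(1,\varphi_\varepsilon)(1+o_\varepsilon(1))=\left(\inf_{\mathcal J}F_{\beta,\kappa}\right)(1+o_\varepsilon(1)).$$ If moreover $\delta=O_\varepsilon(\varepsilon^{3/2})$, then $$\int_0^1v_\varepsilon'(x)^2\,dx+\frac1{4\varepsilon^2}\int_0^1(v_\varepsilon^2(x)-1)^2\,dx=O_\varepsilon\left(\frac{\sqrt\delta}{\varepsilon}\right).$$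
   Context: For $\varepsilon,\delta,\kappa>0$ and suitable $(v,\varphi)$ on $(0,1)$ let $$G_{\varepsilon,\delta,\kappa}(v,\varphi)=\frac12\int_0^1v'^2+\frac{1}{4\varepsilon^2}\int_0^1(1-v^2)^2+\frac18\int_0^1v^2\varphi'^2+\frac{\delta}{8\varepsilon^2}\int_0^1v^4\sin^2\varphi-\frac\kappa2\int_0^1v^2\varphi'.$$ Let $\mathcal S(v)=\{x\in[0,1]:v(x)=0\}$. The admissible class $\mathcal I$ consists of pairs $(v,\varphi)$ with $v\in H^1((0,1))$, $\varphi$ of class $H^1$ on $(0,1)\setminus\mathcal S(v)$, $\varphi(0)=0$ and $\int_0^1v^2=1$; on $\mathcal S(v)$ the quantities $v^2\varphi'^2$, $v^2\varphi'$, $v^4\sin^2\varphi$ are set equal to $0$. For $\beta>0$, $F_{\beta,\kappa}(\varphi)=\frac18\int_0^1(\varphi'^2+\beta^{-2}\sin^2\varphi)-\frac\kappa2\int_0^1\varphi'$ on $\mathcal J=\{\varphi\in H^1((0,1)):\varphi(0)=0\}$. The notations $o_\varepsilon$, $O_\varepsilon$ refer to $\varepsilon\to0$. *)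

theory Defs
  imports "HOL-Analysis.Analysis" "HOL-Library.Landau_Symbols"
begin

definition is_wderiv01 :: "(real \<Rightarrow> real) \<Rightarrow> (real \<Rightarrow> real) \<Rightarrow> bool" where
  "is_wderiv01 v g \<longleftrightarrow>
     g \<in> borel_measurable lborel \<and>
     set_integrable lborel {0..1} g \<and>
     set_integrable lborel {0..1} (\<lambda>x. (g x)^2) \<and>
     (\<forall>x\<in>{0..1}. v x = v 0 + (LINT t:{0..x}|lborel. g t))"

definition H1_01 :: "(real \<Rightarrow> real) \<Rightarrow> bool" where
  "H1_01 v \<longleftrightarrow> (\<exists>g. is_wderiv01 v g)"

definition wderiv01 :: "(real \<Rightarrow> real) \<Rightarrow> (real \<Rightarrow> real)" where
  "wderiv01 v = (SOME g. is_wderiv01 v g)"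

definition zset :: "(real \<Rightarrow> real) \<Rightarrow> real set" where
  "zset v = {x\<in>{0..1}. v x = 0}"

definition is_wderiv_on :: "real set \<Rightarrow> (real \<Rightarrow> real) \<Rightarrow> (real \<Rightarrow> real) \<Rightarrow> bool" where
  "is_wderiv_on U phi g \<longleftrightarrow>
     g \<in> borel_measurable lborel \<and>
     phi \<in> borel_measurable lborel \<and>
     set_integrable lborel U (\<lambda>x. (phi x)^2) \<and>
     set_integrable lborel U (\<lambda>x. (g x)^2) \<and>
     (\<forall>a b. a \<le> b \<and> {a..b} \<subseteq> U \<longrightarrow>
        set_integrable lborel {a..b} g \<and> phi b - phi a = (LINT t:{a..b}|lborel. g t))"

definition wderiv_on :: "real set \<Rightarrow> (real \<Rightarrow> real) \<Rightarrow> (real \<Rightarrow> real)" where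
  "wderiv_on U phi = (SOME g. is_wderiv_on U phi g)"

definition admissible :: "(real \<Rightarrow> real) \<Rightarrow> (real \<Rightarrow> real) \<Rightarrow> bool" where
  "admissible v phi \<longleftrightarrow>
     H1_01 v \<and>
     (\<exists>g. is_wderiv_on ({0..1} - zset v) phi g) \<and>
     phi 0 = 0 \<and>
     (LINT x:{0..1}|lborel. (v x)^2) = 1"

definition G :: "real \<Rightarrow> real \<Rightarrow> real \<Rightarrow> (real \<Rightarrow> real) \<Rightarrow> (real \<Rightarrow> real) \<Rightarrow> real" where
  "G \<epsilon> \<delta> \<kappa> v phi =
     (let U = {0..1} - zset v; dv = wderiv01 v; dphi = wderiv_on U phi in
       1/2 * (LINT x:{0..1}|lborel. (dv x)^2)
     + 1/(4*\<epsilon>^2) * (LINT x:{0..1}|lborel. (1 - (v x)^2)^2)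
     + 1/8 * (LINT x:U|lborel. (v x)^2 * (dphi x)^2)
     + \<delta>/(8*\<epsilon>^2) * (LINT x:U|lborel. (v x)^4 * (sin (phi x))^2)
     - \<kappa>/2 * (LINT x:U|lborel. (v x)^2 * dphi x))"

definition J_class :: "(real \<Rightarrow> real) set" where
  "J_class = {phi. H1_01 phi \<and> phi 0 = 0}"

definition F :: "real \<Rightarrow> real \<Rightarrow> (real \<Rightarrow> real) \<Rightarrow> real" where
  "F \<beta> \<kappa> phi =
     1/8 * (LINT x:{0..1}|lborel. (wderiv01 phi x)^2 + (sin (phi x))^2 / \<beta>^2)
     - \<kappa>/2 * (LINT x:{0..1}|lborel. wderiv01 phi x)"

end

theory Submission
  imports Defs
begin

lemma wd01_D:
  assumes "is_wderiv01 v g"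
  shows "g \<in> borel_measurable lborel" "set_integrable lborel {0..1} g"
    "set_integrable lborel {0..1} (\<lambda>x. (g x)^2)"
    "\<And>x. x \<in> {0..1} \<Longrightarrow> v x = v 0 + (LINT t:{0..x}|lborel. g t)"
  using assms unfolding is_wderiv01_def by blast+

lemma wd01_HK:
  assumes "is_wderiv01 v g" "x \<in> {0..1}"
  shows "g integrable_on {0..x}" "v x = v 0 + integral {0..x} g"
proof -
  have "set_integrable lborel {0..x} g"
    by (rule set_integrable_subset[OF wd01_D(2)[OF assms(1)]]) (use assms(2) in simp_all)
  then show "g integrable_on {0..x}" "v x = v 0 + integral {0..x} g"
    using wd01_D(4)[OF assms] set_borel_integral_eq_integral by simp_all
qed

lemma wd01_interval:
  assumes "is_wderiv01 v g" "0 \<le> a" "a \<le> b" "b \<le> 1"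
  shows "set_integrable lborel {a..b} g" "(LINT t:{a..b}|lborel. g t) = v b - v a"
proof -
  show si: "set_integrable lborel {a..b} g"
    by (rule set_integrable_subset[OF wd01_D(2)[OF assms(1)]]) (use assms(2-4) in simp_all)
  have i1: "g integrable_on {0..b}" and e1: "v b = v 0 + integral {0..b} g"
    using wd01_HK[OF assms(1), of b] assms by simp_all
  have e2: "v a = v 0 + integral {0..a} g"
    using wd01_HK[OF assms(1), of a] assms by simp
  have "integral {0..a} g + integral {a..b} g = integral {0..b} g"
    using Henstock_Kurzweil_Integration.integral_combine[OF assms(2,3) i1] .
  then show "(LINT t:{a..b}|lborel. g t) = v b - v a"
    using set_borel_integral_eq_integral(2)[OF si] e1 e2 by simp
qed

lemma wd01_cont:
  assumes "is_wderiv01 v g"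
  shows "continuous_on {0..1} v"
proof -
  have i1: "g integrable_on {0..1}" using wd01_HK[OF assms, of 1] by simp
  have "continuous_on {0..1} (\<lambda>x. v 0 + integral {0..x} g)"
    by (rule continuous_on_add[OF continuous_on_const indefinite_integral_continuous_1[OF i1]])
  then show ?thesis
    by (rule continuous_on_eq) (metis wd01_HK(2)[OF assms])
qed

lemma lint_Ioi_zero_AE:
  fixes h :: "real \<Rightarrow> real"
  assumes ih: "integrable lborel h" and key: "\<And>c. (LINT x:{c<..}|lborel. h x) = 0"
  shows "AE x in lborel. h x = 0"
proof -
  have hm[measurable]: "h \<in> borel_measurable lborel" using ih by auto
  define M where "M = density lborel (\<lambda>x. ennreal (max 0 (h x)))"
  define N where "N = density lborel (\<lambda>x. ennreal (max 0 (- h x)))"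
  have ip: "integrable lborel (\<lambda>x. max 0 (h x))"
    by (rule integrable_max) (simp_all add: ih)
  have in': "integrable lborel (\<lambda>x. max 0 (- h x))"
    by (rule integrable_max) (simp_all add: ih)
  have s1: "set_integrable lborel {c<..} (\<lambda>x. max 0 (h x))" for c
    unfolding set_integrable_def by (rule integrable_mult_indicator) (simp_all add: ip)
  have s2: "set_integrable lborel {c<..} (\<lambda>x. max 0 (- h x))" for c
    unfolding set_integrable_def by (rule integrable_mult_indicator) (simp_all add: in')
  have em: "emeasure M {c<..} = ennreal (LINT x:{c<..}|lborel. max 0 (h x))" for c
  proof -
    have "emeasure M {c<..} = (\<integral>\<^sup>+x. ennreal (indicator {c<..} x * max 0 (h x)) \<partial>lborel)"
      unfolding M_def by (subst emeasure_density) (auto intro!: nn_integral_cong split: split_indicator)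
    also have "\<dots> = ennreal (LINT x:{c<..}|lborel. max 0 (h x))"
    proof -
      have "integrable lborel (\<lambda>x. indicator {c<..} x * max 0 (h x))"
        using s1[of c] by (simp add: set_integrable_def)
      then show ?thesis unfolding set_lebesgue_integral_def
        by (simp add: nn_integral_eq_integral)
    qed
    finally show ?thesis .
  qed
  have en: "emeasure N {c<..} = ennreal (LINT x:{c<..}|lborel. max 0 (- h x))" for c
  proof -
    have "emeasure N {c<..} = (\<integral>\<^sup>+x. ennreal (indicator {c<..} x * max 0 (- h x)) \<partial>lborel)"
      unfolding N_def by (subst emeasure_density) (auto intro!: nn_integral_cong split: split_indicator)
    also have "\<dots> = ennreal (LINT x:{c<..}|lborel. max 0 (- h x))"
    proof -
      have "integrable lborel (\<lambda>x. indicator {c<..} x * max 0 (- h x))"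
        using s2[of c] by (simp add: set_integrable_def)
      then show ?thesis unfolding set_lebesgue_integral_def
        by (simp add: nn_integral_eq_integral)
    qed
    finally show ?thesis .
  qed
  have "(LINT x:{c<..}|lborel. max 0 (h x)) = (LINT x:{c<..}|lborel. max 0 (- h x))" for c
  proof -
    have "(LINT x:{c<..}|lborel. max 0 (h x)) - (LINT x:{c<..}|lborel. max 0 (- h x))
        = (LINT x:{c<..}|lborel. max 0 (h x) - max 0 (- h x))"
      using set_integral_diff(2)[OF s1 s2] by simp
    also have "\<dots> = (LINT x:{c<..}|lborel. h x)"
      by (rule set_lebesgue_integral_cong) auto
    finally show ?thesis using key by simp
  qed
  moreover have "sets M = sets borel" "sets N = sets borel" by (simp_all add: M_def N_def)
  ultimately have "M = N"
    by (intro measure_eqI_lessThan) (simp_all add: em en)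
  then have "AE x in lborel. ennreal (max 0 (h x)) = ennreal (max 0 (- h x))"
    unfolding M_def N_def
    by (intro sigma_finite_measure.density_unique[OF sigma_finite_lborel]) auto
  then show ?thesis
    by eventually_elim (simp add: max_def split: if_splits)
qed

lemma wd01_unique:
  assumes A: "is_wderiv01 v g1" and B: "is_wderiv01 v g2"
  shows "AE x in lborel. x \<in> {0..1} \<longrightarrow> g1 x = g2 x"
proof -
  define h where "h x = indicator {0..1} x * (g1 x - g2 x)" for x :: real
  have si: "set_integrable lborel {0..1} (\<lambda>x. g1 x - g2 x)"
    using wd01_D(2)[OF A] wd01_D(2)[OF B] by (rule set_integral_diff)
  then have ih: "integrable lborel h" unfolding h_def set_integrable_def by simp
  have key: "(LINT x:{c<..}|lborel. h x) = 0" for c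
  proof -
    have eq: "(LINT x:{c<..}|lborel. h x) = (LINT x:({c<..} \<inter> {0..1})|lborel. g1 x - g2 x)"
      unfolding h_def set_lebesgue_integral_def
      by (intro Bochner_Integration.integral_cong) (simp_all add: indicator_def)
    consider "c < 0" | "0 \<le> c" "c < 1" | "1 \<le> c" by linarith
    then show ?thesis
    proof cases
      case 1
      then have "{c<..} \<inter> {0..1} = {0..1::real}" by auto
      then show ?thesis using eq set_integral_diff(2)[OF wd01_D(2)[OF A] wd01_D(2)[OF B]]
        wd01_interval(2)[OF A, of 0 1] wd01_interval(2)[OF B, of 0 1] by simp
    next
      case 2
      have s: "set_integrable lborel {c..1} (\<lambda>x. g1 x - g2 x)"
        by (rule set_integrable_subset[OF si]) (use 2 in simp_all)
      have "(LINT x:({c<..} \<inter> {0..1})|lborel. g1 x - g2 x) = (LINT x:{c..1}|lborel. g1 x - g2 x)"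
      proof (rule set_integral_cong_set)
        show "set_borel_measurable lborel {c..1} (\<lambda>x. g1 x - g2 x)"
          using s unfolding set_integrable_def set_borel_measurable_def by (rule borel_measurable_integrable)
        have "set_integrable lborel ({c<..} \<inter> {0..1}) (\<lambda>x. g1 x - g2 x)"
          by (rule set_integrable_subset[OF si]) simp_all
        then show "set_borel_measurable lborel ({c<..} \<inter> {0..1}) (\<lambda>x. g1 x - g2 x)"
          unfolding set_integrable_def set_borel_measurable_def by (rule borel_measurable_integrable)
        show "AE x in lborel. (x \<in> {c..1}) = (x \<in> {c<..} \<inter> {0..1})"
          using AE_lborel_singleton[of c] by eventually_elim (use 2 in auto)
      qed
      also have "\<dots> = 0"
        using set_integral_diff(2)[OF wd01_interval(1)[OF A, of c 1] wd01_interval(1)[OF B, of c 1]]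
          wd01_interval(2)[OF A, of c 1] wd01_interval(2)[OF B, of c 1] 2 by simp
      finally show ?thesis using eq by simp
    next
      case 3
      then have "{c<..} \<inter> {0..1} = ({}::real set)" by auto
      then show ?thesis using eq by (simp add: set_lebesgue_integral_def)
    qed
  qed
  have "AE x in lborel. h x = 0" by (rule lint_Ioi_zero_AE[OF ih key])
  then show ?thesis by eventually_elim (simp add: h_def indicator_def)
qed

lemma set_int_const01: "(LINT x:{0..1::real}|lborel. (c::real)) = c"
  by (simp add: set_lebesgue_integral_def)

lemma set_int_nonneg: "(\<And>x. x \<in> A \<Longrightarrow> 0 \<le> f x) \<Longrightarrow> 0 \<le> (LINT x:A|M. (f x::real))"
  unfolding set_lebesgue_integral_def
  by (intro Bochner_Integration.integral_nonneg) (simp add: indicator_def)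

lemma won_imp_wd01:
  assumes "is_wderiv_on {0..1} \<psi> g"
  shows "is_wderiv01 \<psi> g"
proof -
  have A: "\<And>a b. a \<le> b \<and> {a..b} \<subseteq> {0..1} \<Longrightarrow>
        set_integrable lborel {a..b} g \<and> \<psi> b - \<psi> a = (LINT t:{a..b}|lborel. g t)"
    using assms unfolding is_wderiv_on_def by blast
  have B: "g \<in> borel_measurable lborel" "set_integrable lborel {0..1} (\<lambda>x. (g x)^2)"
    using assms unfolding is_wderiv_on_def by blast+
  have C: "set_integrable lborel {0..1} g" using A[of 0 1] by simp
  have D: "\<psi> x = \<psi> 0 + (LINT t:{0..x}|lborel. g t)" if "x \<in> {0..1}" for x
    using A[of 0 x] that by simp
  show ?thesis unfolding is_wderiv01_def using B C D by blast
qed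

lemma wd01_imp_won:
  assumes "is_wderiv01 \<psi> g" "\<psi> \<in> borel_measurable lborel"
    "set_integrable lborel {0..1} (\<lambda>x. (\<psi> x)^2)"
  shows "is_wderiv_on {0..1} \<psi> g"
proof -
  have "set_integrable lborel {a..b} g \<and> \<psi> b - \<psi> a = (LINT t:{a..b}|lborel. g t)"
    if "a \<le> b" "{a..b} \<subseteq> {0..1}" for a b
  proof -
    have "0 \<le> a" "b \<le> 1" using that by auto
    then show ?thesis using wd01_interval[OF assms(1) _ \<open>a \<le> b\<close>] by simp
  qed
  then show ?thesis unfolding is_wderiv_on_def using wd01_D[OF assms(1)] assms(2,3) by blast
qed

lemma wderiv_eq01:
  assumes "\<psi> \<in> borel_measurable lborel" "set_integrable lborel {0..1} (\<lambda>x. (\<psi> x)^2)"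
  shows "wderiv_on {0..1} \<psi> = wderiv01 \<psi>"
proof -
  have "is_wderiv_on {0..1} \<psi> g = is_wderiv01 \<psi> g" for g
    using won_imp_wd01 wd01_imp_won[OF _ assms] by blast
  then show ?thesis unfolding wderiv_on_def wderiv01_def by (rule Eps_cong)
qed

lemma wd01_someI: "H1_01 v \<Longrightarrow> is_wderiv01 v (wderiv01 v)"
  unfolding H1_01_def wderiv01_def by (metis someI_ex)

lemma won_someI: "\<exists>g. is_wderiv_on U v g \<Longrightarrow> is_wderiv_on U v (wderiv_on U v)"
  unfolding wderiv_on_def by (metis someI_ex)

lemma wd01_cong:
  assumes "\<And>x. x \<in> {0..1} \<Longrightarrow> v x = w x"
  shows "is_wderiv01 v g = is_wderiv01 w g"
proof -
  have "v 0 = w 0" using assms by simp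
  then show ?thesis unfolding is_wderiv01_def using assms by auto
qed

lemma wderiv01_cong:
  assumes "\<And>x. x \<in> {0..1} \<Longrightarrow> v x = w x"
  shows "wderiv01 v = wderiv01 w" "H1_01 v = H1_01 w"
proof -
  have e: "is_wderiv01 v = is_wderiv01 w" by (rule ext) (rule wd01_cong[OF assms])
  show "wderiv01 v = wderiv01 w" "H1_01 v = H1_01 w" unfolding wderiv01_def H1_01_def e by simp_all
qed

lemma wd01_const: "is_wderiv01 (\<lambda>_. c) (\<lambda>_. 0)"
  unfolding is_wderiv01_def by (simp add: set_integrable_def)

lemma wd01_const_sq: "(LINT x:{0..1}|lborel. (wderiv01 (\<lambda>_. c) x)^2) = 0"
proof -
  have w: "is_wderiv01 (\<lambda>_. c) (wderiv01 (\<lambda>_. c))"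
    using wd01_const H1_01_def wd01_someI by blast
  have "AE x in lborel. x \<in> {0..1} \<longrightarrow> wderiv01 (\<lambda>_. c) x = 0"
    using wd01_unique[OF w wd01_const] .
  have "(LINT x:{0..1}|lborel. (wderiv01 (\<lambda>_. c) x)^2) = (LINT x:{0..1::real}|lborel. (0::real))"
  proof (rule set_lebesgue_integral_cong_AE)
    have [measurable]: "wderiv01 (\<lambda>_. c) \<in> borel_measurable lborel" using wd01_D(1)[OF w] .
    show "(\<lambda>x. (wderiv01 (\<lambda>_. c) x)^2) \<in> borel_measurable lborel" by measurable
  qed (use \<open>AE x in lborel. x \<in> {0..1} \<longrightarrow> wderiv01 (\<lambda>_. c) x = 0\<close> in \<open>auto elim!: eventually_mono\<close>)
  then show ?thesis by simp
qed


lemma cont_sin_sq: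
  fixes \<psi> :: "real \<Rightarrow> real" and c :: real
  assumes "continuous_on {0..1} \<psi>"
  shows "set_integrable lborel {0..1::real} (\<lambda>x. (sin (\<psi> x))^2 * c)"
proof -
  have "continuous_on {0..1} (\<lambda>x. sin (\<psi> x))" by (rule continuous_on_sin[OF assms])
  then show ?thesis by (intro borel_integrable_atLeastAtMost' continuous_intros assms)
qed

lemma F_split:
  assumes "H1_01 \<psi>"
  shows "F \<beta> \<kappa> \<psi> = 1/8 * (LINT x:{0..1}|lborel. (wderiv01 \<psi> x)^2)
     + 1/8 * (1/\<beta>^2) * (LINT x:{0..1}|lborel. (sin (\<psi> x))^2)
     - \<kappa>/2 * (LINT x:{0..1}|lborel. wderiv01 \<psi> x)"
proof -
  have w: "is_wderiv01 \<psi> (wderiv01 \<psi>)" by (rule wd01_someI[OF assms])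
  have c: "continuous_on {0..1} \<psi>" by (rule wd01_cont[OF w])
  have i1: "set_integrable lborel {0..1} (\<lambda>x. (wderiv01 \<psi> x)^2)" by (rule wd01_D(3)[OF w])
  have i2: "set_integrable lborel {0..1::real} (\<lambda>x. (sin (\<psi> x))^2 * (1/\<beta>^2))" by (rule cont_sin_sq[OF c])
  have "(LINT x:{0..1}|lborel. (wderiv01 \<psi> x)^2 + (sin (\<psi> x))^2 / \<beta>^2)
      = (LINT x:{0..1}|lborel. (wderiv01 \<psi> x)^2 + (sin (\<psi> x))^2 * (1/\<beta>^2))"
    by simp
  also have "\<dots> = (LINT x:{0..1}|lborel. (wderiv01 \<psi> x)^2) + (LINT x:{0..1}|lborel. (sin (\<psi> x))^2 * (1/\<beta>^2))"
    by (rule set_integral_add(2)[OF i1 i2])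
  also have "(LINT x:{0..1}|lborel. (sin (\<psi> x))^2 * (1/\<beta>^2)) = (LINT x:{0..1}|lborel. (sin (\<psi> x))^2) * (1/\<beta>^2)"
    by (rule set_integral_mult_left)
  finally show ?thesis unfolding F_def by (simp add: algebra_simps)
qed

lemma F_lower:
  assumes "\<psi> \<in> J_class"
  shows "F \<beta> \<kappa> \<psi> \<ge> - (\<kappa>^2) / 2"
proof -
  have h: "H1_01 \<psi>" using assms unfolding J_class_def by simp
  have w: "is_wderiv01 \<psi> (wderiv01 \<psi>)" by (rule wd01_someI[OF h])
  have i1: "set_integrable lborel {0..1} (\<lambda>x. (wderiv01 \<psi> x)^2)" by (rule wd01_D(3)[OF w])
  have i0: "set_integrable lborel {0..1} (\<lambda>x. 4 * \<kappa> * wderiv01 \<psi> x)"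
    by (rule set_integrable_mult_right) (rule wd01_D(2)[OF w])
  have "(LINT x:{0..1}|lborel. (wderiv01 \<psi> x)^2) - 4 * \<kappa> * (LINT x:{0..1}|lborel. wderiv01 \<psi> x)
      = (LINT x:{0..1}|lborel. (wderiv01 \<psi> x)^2 - 4 * \<kappa> * wderiv01 \<psi> x)"
    using set_integral_diff(2)[OF i1 i0] set_integral_mult_right by simp
  also have "\<dots> \<ge> (LINT x:{0..1::real}|lborel. - 4 * \<kappa>^2)"
  proof (rule set_integral_mono)
    show "set_integrable lborel {0..1::real} (\<lambda>x. - 4 * \<kappa>^2)"
      by (rule borel_integrable_atLeastAtMost') simp
    show "set_integrable lborel {0..1} (\<lambda>x. (wderiv01 \<psi> x)^2 - 4 * \<kappa> * wderiv01 \<psi> x)"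
      by (rule set_integral_diff(1)[OF i1 i0])
    fix x :: real
    have "0 \<le> (wderiv01 \<psi> x - 2 * \<kappa>)^2" by simp
    then show "- 4 * \<kappa>^2 \<le> (wderiv01 \<psi> x)^2 - 4 * \<kappa> * wderiv01 \<psi> x"
      by (simp add: power2_eq_square algebra_simps)
  qed
  finally have A: "(LINT x:{0..1}|lborel. (wderiv01 \<psi> x)^2) - 4 * \<kappa> * (LINT x:{0..1}|lborel. wderiv01 \<psi> x) \<ge> - 4 * \<kappa>^2"
    by (simp add: set_int_const01)
  have B: "0 \<le> 1/8 * (1/\<beta>^2) * (LINT x:{0..1}|lborel. (sin (\<psi> x))^2)"
    by (intro mult_nonneg_nonneg set_int_nonneg) simp_all
  show ?thesis unfolding F_split[OF h] using A B by (simp add: field_simps)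
qed

lemma zset_one: "zset (\<lambda>_. 1) = {}" unfolding zset_def by simp

lemma G_one_eq_F:
  assumes m: "\<psi> \<in> borel_measurable lborel" and s: "set_integrable lborel {0..1} (\<lambda>x. (\<psi> x)^2)"
    and h: "H1_01 \<psi>" and e: "\<epsilon> > 0" and d: "\<delta> > 0"
  shows "G \<epsilon> \<delta> \<kappa> (\<lambda>_. 1) \<psi> = F (\<epsilon> / sqrt \<delta>) \<kappa> \<psi>"
proof -
  have b: "1 / (\<epsilon> / sqrt \<delta>)^2 = \<delta> / \<epsilon>^2" using e d by (simp add: power_divide)
  show ?thesis
    unfolding G_def F_split[OF h] Let_def zset_one Diff_empty wderiv_eq01[OF m s] wd01_const_sq b
    by (simp add: algebra_simps)
qed

definition restr01 :: "(real \<Rightarrow> real) \<Rightarrow> real \<Rightarrow> real" where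
  "restr01 \<psi> x = (if x \<in> {0..1} then \<psi> x else 0)"

lemma restr01:
  assumes h: "H1_01 \<psi>"
  shows "restr01 \<psi> \<in> borel_measurable lborel"
    "set_integrable lborel {0..1} (\<lambda>x. (restr01 \<psi> x)^2)"
    "H1_01 (restr01 \<psi>)" "F \<beta> \<kappa> (restr01 \<psi>) = F \<beta> \<kappa> \<psi>" "restr01 \<psi> 0 = \<psi> 0"
proof -
  have w: "is_wderiv01 \<psi> (wderiv01 \<psi>)" by (rule wd01_someI[OF h])
  have c: "continuous_on {0..1} \<psi>" by (rule wd01_cont[OF w])
  have eq: "restr01 \<psi> = (\<lambda>x. indicator {0..1} x *\<^sub>R \<psi> x)"
    by (rule ext) (simp add: restr01_def indicator_def)
  show "restr01 \<psi> \<in> borel_measurable lborel"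
    unfolding eq using borel_measurable_continuous_on_indicator[OF _ c] by simp
  have c2: "continuous_on {0..1} (\<lambda>x. (restr01 \<psi> x)^2)"
  proof -
    have "continuous_on {0..1} (\<lambda>x. (\<psi> x)^2)" by (intro continuous_intros c)
    then show ?thesis by (rule continuous_on_eq) (simp add: restr01_def)
  qed
  show "set_integrable lborel {0..1} (\<lambda>x. (restr01 \<psi> x)^2)"
    by (rule borel_integrable_atLeastAtMost'[OF c2])
  have cg: "\<And>x. x \<in> {0..1} \<Longrightarrow> restr01 \<psi> x = \<psi> x" by (simp add: restr01_def)
  show "H1_01 (restr01 \<psi>)" using wderiv01_cong(2)[OF cg] h by simp
  have "(LINT x:{0..1}|lborel. (wderiv01 \<psi> x)^2 + (sin (restr01 \<psi> x))^2 / \<beta>^2)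
      = (LINT x:{0..1}|lborel. (wderiv01 \<psi> x)^2 + (sin (\<psi> x))^2 / \<beta>^2)"
    by (rule set_lebesgue_integral_cong) (simp_all add: restr01_def)
  moreover have e: "wderiv01 (restr01 \<psi>) = wderiv01 \<psi>" by (rule wderiv01_cong(1)) (simp add: restr01_def)
  ultimately show "F \<beta> \<kappa> (restr01 \<psi>) = F \<beta> \<kappa> \<psi>"
    unfolding F_def e by simp
  show "restr01 \<psi> 0 = \<psi> 0" by (simp add: restr01_def)
qed

lemma adm_one:
  assumes "\<psi> \<in> borel_measurable lborel" "set_integrable lborel {0..1} (\<lambda>x. (\<psi> x)^2)"
    "H1_01 \<psi>" "\<psi> 0 = 0"
  shows "admissible (\<lambda>_. 1) \<psi>"
proof -
  have "is_wderiv_on {0..1} \<psi> (wderiv01 \<psi>)"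
    by (rule wd01_imp_won[OF wd01_someI[OF assms(3)] assms(1,2)])
  then show ?thesis unfolding admissible_def zset_one Diff_empty
    using assms(3,4) wd01_const[of 1] H1_01_def by (auto simp: set_int_const01)
qed

lemma G_le_inf:
  assumes e: "\<epsilon> > 0" and d: "\<delta> > 0"
    and mini: "\<forall>w \<psi>. admissible w \<psi> \<longrightarrow> G \<epsilon> \<delta> \<kappa> v \<phi> \<le> G \<epsilon> \<delta> \<kappa> w \<psi>"
  shows "G \<epsilon> \<delta> \<kappa> v \<phi> \<le> (INF \<psi>\<in>J_class. F (\<epsilon> / sqrt \<delta>) \<kappa> \<psi>)"
proof (rule cINF_greatest)
  show "J_class \<noteq> {}" using wd01_const[of 0] unfolding J_class_def H1_01_def by auto
  fix \<psi> assume "\<psi> \<in> J_class"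
  then have h: "H1_01 \<psi>" and z: "\<psi> 0 = 0" unfolding J_class_def by auto
  have "admissible (\<lambda>_. 1) (restr01 \<psi>)"
    by (rule adm_one) (use restr01[OF h] z in simp_all)
  then have "G \<epsilon> \<delta> \<kappa> v \<phi> \<le> G \<epsilon> \<delta> \<kappa> (\<lambda>_. 1) (restr01 \<psi>)" using mini by blast
  also have "\<dots> = F (\<epsilon> / sqrt \<delta>) \<kappa> (restr01 \<psi>)"
    by (rule G_one_eq_F[OF restr01(1,2,3)[OF h] e d])
  also have "\<dots> = F (\<epsilon> / sqrt \<delta>) \<kappa> \<psi>" by (rule restr01(4)[OF h])
  finally show "G \<epsilon> \<delta> \<kappa> v \<phi> \<le> F (\<epsilon> / sqrt \<delta>) \<kappa> \<psi>" .
qed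

lemma inf_lower:
  shows "(INF \<psi>\<in>J_class. F \<beta> \<kappa> \<psi>) \<ge> - (\<kappa>^2) / 2"
proof (rule cINF_greatest)
  show "J_class \<noteq> {}" using wd01_const[of 0] unfolding J_class_def H1_01_def by auto
qed (rule F_lower)

lemma inf_le:
  assumes "\<psi> \<in> J_class"
  shows "(INF \<psi>\<in>J_class. F \<beta> \<kappa> \<psi>) \<le> F \<beta> \<kappa> \<psi>"
  by (rule cINF_lower[OF _ assms]) (auto intro!: bdd_belowI2 F_lower)

lemma set_int_cong01:
  assumes "A \<subseteq> {0..1}" "\<And>x. x \<in> {0..1} \<Longrightarrow> f x = g x"
  shows "(LINT x:A|lborel. f x) = (LINT x:A|lborel. (g x :: real))"
  unfolding set_lebesgue_integral_def
  by (rule Bochner_Integration.integral_cong) (use assms in \<open>auto simp: indicator_def\<close>)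

lemma zset_cong: "(\<And>x. x \<in> {0..1} \<Longrightarrow> v x = w x) \<Longrightarrow> zset v = zset w"
  unfolding zset_def by auto

lemma G_cong01:
  assumes c: "\<And>x. x \<in> {0..1} \<Longrightarrow> v x = w x"
  shows "G \<epsilon> \<delta> \<kappa> v \<phi> = G \<epsilon> \<delta> \<kappa> w \<phi>"
proof -
  have z: "zset v = zset w" by (rule zset_cong[OF c])
  have d: "wderiv01 v = wderiv01 w" by (rule wderiv01_cong(1)[OF c])
  let ?U = "{0..1} - zset w"
  have U: "?U \<subseteq> {0..1}" by auto
  show ?thesis unfolding G_def Let_def z d
    using set_int_cong01[OF order_refl, of "\<lambda>x. (1 - (v x)^2)^2" "\<lambda>x. (1 - (w x)^2)^2"]
      set_int_cong01[OF U, of "\<lambda>x. (v x)^2 * (wderiv_on ?U \<phi> x)^2" "\<lambda>x. (w x)^2 * (wderiv_on ?U \<phi> x)^2"]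
      set_int_cong01[OF U, of "\<lambda>x. (v x)^4 * (sin (\<phi> x))^2" "\<lambda>x. (w x)^4 * (sin (\<phi> x))^2"]
      set_int_cong01[OF U, of "\<lambda>x. (v x)^2 * wderiv_on ?U \<phi> x" "\<lambda>x. (w x)^2 * wderiv_on ?U \<phi> x"]
      c by simp
qed

lemma adm_cong01:
  assumes c: "\<And>x. x \<in> {0..1} \<Longrightarrow> v x = w x"
  shows "admissible v \<phi> = admissible w \<phi>"
proof -
  have z: "zset v = zset w" by (rule zset_cong[OF c])
  have h: "H1_01 v = H1_01 w" by (rule wderiv01_cong(2)[OF c])
  have "(LINT x:{0..1}|lborel. (v x)^2) = (LINT x:{0..1}|lborel. (w x)^2)"
    by (rule set_int_cong01) (use c in simp_all)
  then show ?thesis unfolding admissible_def z h by simp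
qed

lemma restr01_meas:
  assumes c: "continuous_on {0..1} \<psi>"
  shows "restr01 \<psi> \<in> borel_measurable lborel"
proof -
  have eq: "restr01 \<psi> = (\<lambda>x. indicator {0..1} x *\<^sub>R \<psi> x)"
    by (rule ext) (simp add: restr01_def indicator_def)
  show ?thesis
    unfolding eq using borel_measurable_continuous_on_indicator[OF _ c] by simp
qed

lemma bounded01:
  fixes v :: "real \<Rightarrow> real"
  assumes "continuous_on {0..1} v"
  shows "\<exists>K. \<forall>x\<in>{0..1}. \<bar>v x\<bar> \<le> K"
proof -
  have "bounded (v ` {0..1})"
    by (intro compact_imp_bounded compact_continuous_image assms) simp
  then show ?thesis unfolding bounded_iff by auto
qed

lemma set_int_lin4:
  fixes f1 f2 f3 f4 :: "real \<Rightarrow> real"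
  assumes "set_integrable M A f1" "set_integrable M A f2" "set_integrable M A f3" "set_integrable M A f4"
  shows "set_integrable M A (\<lambda>x. c1 * f1 x + c2 * f2 x + c3 * f3 x + c4 * f4 x)"
    "(LINT x:A|M. c1 * f1 x + c2 * f2 x + c3 * f3 x + c4 * f4 x)
      = c1 * (LINT x:A|M. f1 x) + c2 * (LINT x:A|M. f2 x) + c3 * (LINT x:A|M. f3 x) + c4 * (LINT x:A|M. f4 x)"
proof -
  have i1: "set_integrable M A (\<lambda>x. c1 * f1 x)" by (rule set_integrable_mult_right) (rule assms(1))
  have i2: "set_integrable M A (\<lambda>x. c2 * f2 x)" by (rule set_integrable_mult_right) (rule assms(2))
  have i3: "set_integrable M A (\<lambda>x. c3 * f3 x)" by (rule set_integrable_mult_right) (rule assms(3))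
  have i4: "set_integrable M A (\<lambda>x. c4 * f4 x)" by (rule set_integrable_mult_right) (rule assms(4))
  have j12: "set_integrable M A (\<lambda>x. c1 * f1 x + c2 * f2 x)" by (rule set_integral_add(1)[OF i1 i2])
  have j123: "set_integrable M A (\<lambda>x. c1 * f1 x + c2 * f2 x + c3 * f3 x)" by (rule set_integral_add(1)[OF j12 i3])
  show "set_integrable M A (\<lambda>x. c1 * f1 x + c2 * f2 x + c3 * f3 x + c4 * f4 x)" by (rule set_integral_add(1)[OF j123 i4])
  show "(LINT x:A|M. c1 * f1 x + c2 * f2 x + c3 * f3 x + c4 * f4 x)
      = c1 * (LINT x:A|M. f1 x) + c2 * (LINT x:A|M. f2 x) + c3 * (LINT x:A|M. f3 x) + c4 * (LINT x:A|M. f4 x)"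
    by (simp only: set_integral_add(2)[OF j123 i4] set_integral_add(2)[OF j12 i3] set_integral_add(2)[OF i1 i2]
        set_integral_mult_right)
qed


lemma zset_closed:
  assumes "continuous_on {0..1} v"
  shows "closed (zset v)"
  unfolding zset_def by (rule continuous_closed_preimage_constant[OF assms]) simp

lemma U_sets:
  assumes "continuous_on {0..1} v"
  shows "{0..1} - zset v \<in> sets lborel"
proof -
  have "zset v \<in> sets borel" using zset_closed[OF assms] by (rule borel_closed)
  then show ?thesis by auto
qed

lemma set_int_constU:
  assumes "U \<in> sets lborel" "U \<subseteq> {0..1::real}"
  shows "set_integrable lborel U (\<lambda>_. c::real)"
proof -
  have "set_integrable lborel {0..1::real} (\<lambda>_. c)" by (rule borel_integrable_atLeastAtMost') simp
  then show ?thesis by (rule set_integrable_subset) (use assms in simp_all)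
qed

lemma phase_integrable:
  fixes v \<phi> p :: "real \<Rightarrow> real"
  assumes U: "U \<in> sets lborel" "U \<subseteq> {0..1}"
    and vm[measurable]: "v \<in> borel_measurable lborel"
    and pm[measurable]: "p \<in> borel_measurable lborel"
    and fm[measurable]: "\<phi> \<in> borel_measurable lborel"
    and p2: "set_integrable lborel U (\<lambda>x. (p x)^2)"
    and K: "\<forall>x\<in>{0..1}. \<bar>v x\<bar> \<le> K"
  shows "set_integrable lborel U (\<lambda>x. (v x)^2 * (p x)^2)"
    "set_integrable lborel U (\<lambda>x. (v x)^2 * p x)"
    "set_integrable lborel U (\<lambda>x. (v x)^2)"
    "set_integrable lborel U (\<lambda>x. (v x)^4 * (sin (\<phi> x))^2)"
    "set_integrable lborel U (\<lambda>x. p x)"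
proof -
  have [measurable]: "U \<in> sets lborel" using U(1) .
  have K0: "0 \<le> K" using K by force
  have vK: "(v x)^2 \<le> K^2" if "x \<in> U" for x
  proof -
    have "\<bar>v x\<bar> \<le> K" using K U(2) that by auto
    then have "\<bar>v x\<bar>^2 \<le> K^2" by (rule power_mono) simp
    then show ?thesis by simp
  qed
  have c1: "set_integrable lborel U (\<lambda>_. 1::real)" by (rule set_int_constU[OF U])
  have pa: "set_integrable lborel U (\<lambda>x. (1 + (p x)^2))"
    by (rule set_integral_add(1)[OF c1 p2])
  show P: "set_integrable lborel U (\<lambda>x. p x)"
  proof (rule set_integrable_bound[OF pa])
    show "set_borel_measurable lborel U p" unfolding set_borel_measurable_def by measurable
    show "AE x in lborel. x \<in> U \<longrightarrow> norm (p x) \<le> norm (1 + (p x)^2)"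
    proof (intro AE_I2 impI)
      fix x
      have "\<bar>p x\<bar> \<le> 1 + (p x)^2"
      proof (cases "\<bar>p x\<bar> \<le> 1")
        case True
        then show ?thesis by (simp add: add_increasing2)
      next
        case False
        have "\<bar>p x\<bar> * 1 \<le> \<bar>p x\<bar> * \<bar>p x\<bar>" by (rule mult_left_mono) (use False in simp_all)
        also have "\<dots> = (p x)^2" by (simp add: power2_eq_square)
        finally show ?thesis by simp
      qed
      then show "norm (p x) \<le> norm (1 + (p x)^2)" by simp
    qed
  qed
  show "set_integrable lborel U (\<lambda>x. (v x)^2 * (p x)^2)"
  proof (rule set_integrable_bound[OF set_integrable_mult_right[of "K^2", OF p2]])
    show "set_borel_measurable lborel U (\<lambda>x. (v x)^2 * (p x)^2)" unfolding set_borel_measurable_def by measurable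
    show "AE x in lborel. x \<in> U \<longrightarrow> norm ((v x)^2 * (p x)^2) \<le> norm (K^2 * (p x)^2)"
      by (intro AE_I2 impI) (simp add: abs_mult mult_right_mono vK)
  qed
  show "set_integrable lborel U (\<lambda>x. (v x)^2 * p x)"
  proof (rule set_integrable_bound[OF set_integrable_mult_right[of "K^2", OF P]])
    show "set_borel_measurable lborel U (\<lambda>x. (v x)^2 * p x)" unfolding set_borel_measurable_def by measurable
    show "AE x in lborel. x \<in> U \<longrightarrow> norm ((v x)^2 * p x) \<le> norm (K^2 * p x)"
      by (intro AE_I2 impI) (simp add: abs_mult mult_right_mono vK)
  qed
  show "set_integrable lborel U (\<lambda>x. (v x)^2)"
  proof (rule set_integrable_bound[OF set_int_constU[OF U, of "K^2"]])
    show "set_borel_measurable lborel U (\<lambda>x. (v x)^2)" unfolding set_borel_measurable_def by measurable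
    show "AE x in lborel. x \<in> U \<longrightarrow> norm ((v x)^2) \<le> norm (K^2)"
      by (intro AE_I2 impI) (simp add: vK)
  qed
  show "set_integrable lborel U (\<lambda>x. (v x)^4 * (sin (\<phi> x))^2)"
  proof (rule set_integrable_bound[OF set_int_constU[OF U, of "K^4"]])
    show "set_borel_measurable lborel U (\<lambda>x. (v x)^4 * (sin (\<phi> x))^2)" unfolding set_borel_measurable_def by measurable
    show "AE x in lborel. x \<in> U \<longrightarrow> norm ((v x)^4 * (sin (\<phi> x))^2) \<le> norm (K^4)"
    proof (intro AE_I2 impI)
      fix x assume "x \<in> U"
      have "((v x)^2)^2 \<le> (K^2)^2" by (rule power_mono[OF vK[OF \<open>x \<in> U\<close>]]) simp
      then have a: "(v x)^4 \<le> K^4" by (simp add: power_mult[symmetric])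
      have b: "(sin (\<phi> x))^2 \<le> 1" by (simp add: abs_square_le_1)
      have "(v x)^4 * (sin (\<phi> x))^2 \<le> K^4 * 1" by (rule mult_mono[OF a b]) simp_all
      then show "norm ((v x)^4 * (sin (\<phi> x))^2) \<le> norm (K^4)" by simp
    qed
  qed
qed


definition Eng :: "real \<Rightarrow> (real \<Rightarrow> real) \<Rightarrow> real" where
  "Eng \<epsilon> v = 1/2 * (LINT x:{0..1}|lborel. (wderiv01 v x)^2) + 1/(4*\<epsilon>^2) * (LINT x:{0..1}|lborel. (1 - (v x)^2)^2)"

lemma G_crude:
  fixes v \<phi> :: "real \<Rightarrow> real"
  assumes adm: "admissible v \<phi>" and vm[measurable]: "v \<in> borel_measurable lborel" and d: "\<delta> \<ge> 0"
  shows "G \<epsilon> \<delta> \<kappa> v \<phi> \<ge> Eng \<epsilon> v - \<kappa>^2/2"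
proof -
  have h: "H1_01 v" and ex: "\<exists>g. is_wderiv_on ({0..1} - zset v) \<phi> g"
    and n: "(LINT x:{0..1}|lborel. (v x)^2) = 1"
    using adm unfolding admissible_def by auto
  have c: "continuous_on {0..1} v" by (rule wd01_cont[OF wd01_someI[OF h]])
  define U where "U = {0..1} - zset v"
  have Us: "U \<in> sets lborel" unfolding U_def by (rule U_sets[OF c])
  have Usub: "U \<subseteq> {0..1}" unfolding U_def by auto
  define p where "p = wderiv_on U \<phi>"
  have wp: "is_wderiv_on U \<phi> p" unfolding p_def U_def by (rule won_someI[OF ex])
  have pm[measurable]: "p \<in> borel_measurable lborel" and fm[measurable]: "\<phi> \<in> borel_measurable lborel"
    and p2: "set_integrable lborel U (\<lambda>x. (p x)^2)"
    using wp unfolding is_wderiv_on_def by blast+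
  obtain K where K: "\<forall>x\<in>{0..1}. \<bar>v x\<bar> \<le> K" using bounded01[OF c] by blast
  note I = phase_integrable[OF Us Usub vm pm fm p2 K]
  have nU: "(LINT x:U|lborel. (v x)^2) = 1"
  proof -
    have "(LINT x:U|lborel. (v x)^2) = (LINT x:{0..1}|lborel. (v x)^2)"
      unfolding set_lebesgue_integral_def
      by (rule Bochner_Integration.integral_cong) (auto simp: U_def zset_def indicator_def)
    then show ?thesis using n by simp
  qed
  have A: "1/8 * (LINT x:U|lborel. (v x)^2 * (p x)^2) - \<kappa>/2 * (LINT x:U|lborel. (v x)^2 * p x)
      + \<kappa>^2/2 * (LINT x:U|lborel. (v x)^2) + 0 * (LINT x:U|lborel. p x) \<ge> 0"
  proof -
    have "0 \<le> (LINT x:U|lborel. 1/8 * ((v x)^2 * (p x)^2) + (- \<kappa>/2) * ((v x)^2 * p x)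
      + \<kappa>^2/2 * ((v x)^2) + 0 * p x)"
    proof (rule set_int_nonneg)
      fix x
      have "0 \<le> (v x)^2 * (p x - 2*\<kappa>)^2 / 8" by simp
      also have "(v x)^2 * (p x - 2*\<kappa>)^2 / 8 = 1/8 * ((v x)^2 * (p x)^2) + (- \<kappa>/2) * ((v x)^2 * p x)
        + \<kappa>^2/2 * ((v x)^2) + 0 * p x" by (simp add: power2_eq_square field_simps)
      finally show "0 \<le> 1/8 * ((v x)^2 * (p x)^2) + (- \<kappa>/2) * ((v x)^2 * p x)
        + \<kappa>^2/2 * ((v x)^2) + 0 * p x" .
    qed
    also have "\<dots> = 1/8 * (LINT x:U|lborel. (v x)^2 * (p x)^2) + (- \<kappa>/2) * (LINT x:U|lborel. (v x)^2 * p x)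
      + \<kappa>^2/2 * (LINT x:U|lborel. (v x)^2) + 0 * (LINT x:U|lborel. p x)"
      by (rule set_int_lin4(2)[OF I(1,2,3,5)])
    finally show ?thesis by simp
  qed
  have B: "0 \<le> \<delta>/(8*\<epsilon>^2) * (LINT x:U|lborel. (v x)^4 * (sin (\<phi> x))^2)"
    by (intro mult_nonneg_nonneg set_int_nonneg) (use d in simp_all)
  have "G \<epsilon> \<delta> \<kappa> v \<phi> = Eng \<epsilon> v + 1/8 * (LINT x:U|lborel. (v x)^2 * (p x)^2)
     + \<delta>/(8*\<epsilon>^2) * (LINT x:U|lborel. (v x)^4 * (sin (\<phi> x))^2)
     - \<kappa>/2 * (LINT x:U|lborel. (v x)^2 * p x)"
    unfolding G_def Eng_def Let_def U_def[symmetric] p_def[symmetric] by simp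
  then show ?thesis using A B nU by simp
qed


lemma G_fine:
  fixes v \<phi> :: "real \<Rightarrow> real"
  assumes adm: "admissible v \<phi>" and vm[measurable]: "v \<in> borel_measurable lborel"
    and d: "\<delta> > 0" and e: "\<epsilon> > 0" and l: "0 < l" "l \<le> 1" and vl: "\<forall>x\<in>{0..1}. l \<le> v x"
  shows "\<phi> \<in> J_class" "G \<epsilon> \<delta> \<kappa> (\<lambda>_. 1) \<phi> = F (\<epsilon> / sqrt \<delta>) \<kappa> \<phi>"
    "G \<epsilon> \<delta> \<kappa> v \<phi> \<ge> Eng \<epsilon> v + l^4 * (F (\<epsilon> / sqrt \<delta>) \<kappa> \<phi> + \<kappa>^2/2) - \<kappa>^2/2"
proof -
  have h: "H1_01 v" and ex0: "\<exists>g. is_wderiv_on ({0..1} - zset v) \<phi> g"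
    and n: "(LINT x:{0..1}|lborel. (v x)^2) = 1" and f0: "\<phi> 0 = 0"
    using adm unfolding admissible_def by auto
  have c: "continuous_on {0..1} v" by (rule wd01_cont[OF wd01_someI[OF h]])
  have z: "zset v = {}" unfolding zset_def using vl l by force
  have ex: "\<exists>g. is_wderiv_on {0..1} \<phi> g" using ex0 z by simp
  define p where "p = wderiv_on {0..1} \<phi>"
  have wp: "is_wderiv_on {0..1} \<phi> p" unfolding p_def by (rule won_someI[OF ex])
  have pm[measurable]: "p \<in> borel_measurable lborel" and fm[measurable]: "\<phi> \<in> borel_measurable lborel"
    and p2: "set_integrable lborel {0..1} (\<lambda>x. (p x)^2)"
    and f2: "set_integrable lborel {0..1} (\<lambda>x. (\<phi> x)^2)"
    using wp unfolding is_wderiv_on_def by blast+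
  have peq: "wderiv01 \<phi> = p" unfolding p_def by (rule wderiv_eq01[OF fm f2, symmetric])
  have wd: "is_wderiv01 \<phi> p" by (rule won_imp_wd01[OF wp])
  have hf: "H1_01 \<phi>" using wd unfolding H1_01_def by blast
  show "\<phi> \<in> J_class" unfolding J_class_def using hf f0 by simp
  show "G \<epsilon> \<delta> \<kappa> (\<lambda>_. 1) \<phi> = F (\<epsilon> / sqrt \<delta>) \<kappa> \<phi>" by (rule G_one_eq_F[OF fm f2 hf e d])
  have cf: "continuous_on {0..1} \<phi>" by (rule wd01_cont[OF wd])
  obtain K where K: "\<forall>x\<in>{0..1}. \<bar>v x\<bar> \<le> K" using bounded01[OF c] by blast
  note I = phase_integrable[OF _ order_refl vm pm fm p2 K, simplified]
  have s1: "set_integrable lborel {0..1::real} (\<lambda>x. (sin (\<phi> x))^2)" using cont_sin_sq[OF cf, of 1] by simp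
  have c1: "set_integrable lborel {0..1::real} (\<lambda>x. 1::real)" by (rule set_int_constU) simp_all
  define a8 where "a8 = \<delta>/(8*\<epsilon>^2)"
  have a8: "a8 \<ge> 0" unfolding a8_def using d by simp
  have b: "1/8 * (1 / (\<epsilon> / sqrt \<delta>)^2) = a8" unfolding a8_def using e d by (simp add: power_divide)
  have Feq: "F (\<epsilon> / sqrt \<delta>) \<kappa> \<phi> + \<kappa>^2/2 = 1/8 * (LINT x:{0..1}|lborel. (p x)^2) + a8 * (LINT x:{0..1}|lborel. (sin (\<phi> x))^2)
     + (-\<kappa>/2) * (LINT x:{0..1}|lborel. p x) + \<kappa>^2/2 * (LINT x:{0..1::real}|lborel. 1)"
    unfolding F_split[OF hf] peq b by (simp add: set_int_const01)
  also have "\<dots> = (LINT x:{0..1}|lborel. 1/8 * (p x)^2 + a8 * (sin (\<phi> x))^2 + (-\<kappa>/2) * p x + \<kappa>^2/2 * 1)"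
    by (rule set_int_lin4(2)[OF p2 s1 I(5) c1, symmetric])
  finally have Feq2: "F (\<epsilon> / sqrt \<delta>) \<kappa> \<phi> + \<kappa>^2/2 = (LINT x:{0..1}|lborel. 1/8 * (p x)^2 + a8 * (sin (\<phi> x))^2 + (-\<kappa>/2) * p x + \<kappa>^2/2 * 1)" .
  have iR: "set_integrable lborel {0..1} (\<lambda>x. 1/8 * (p x)^2 + a8 * (sin (\<phi> x))^2 + (-\<kappa>/2) * p x + \<kappa>^2/2 * 1)"
    by (rule set_int_lin4(1)[OF p2 s1 I(5) c1])
  have iL: "set_integrable lborel {0..1} (\<lambda>x. 1/8 * ((v x)^2 * (p x)^2) + a8 * ((v x)^4 * (sin (\<phi> x))^2) + (-\<kappa>/2) * ((v x)^2 * p x) + \<kappa>^2/2 * (v x)^2)"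
    by (rule set_int_lin4(1)[OF I(1) I(4) I(2) I(3)])
  have Geq: "G \<epsilon> \<delta> \<kappa> v \<phi> - Eng \<epsilon> v + \<kappa>^2/2 = 1/8 * (LINT x:{0..1}|lborel. (v x)^2 * (p x)^2) + a8 * (LINT x:{0..1}|lborel. (v x)^4 * (sin (\<phi> x))^2)
     + (-\<kappa>/2) * (LINT x:{0..1}|lborel. (v x)^2 * p x) + \<kappa>^2/2 * (LINT x:{0..1}|lborel. (v x)^2)"
    unfolding G_def Eng_def Let_def z Diff_empty p_def[symmetric] n a8_def by simp
  also have "\<dots> = (LINT x:{0..1}|lborel. 1/8 * ((v x)^2 * (p x)^2) + a8 * ((v x)^4 * (sin (\<phi> x))^2) + (-\<kappa>/2) * ((v x)^2 * p x) + \<kappa>^2/2 * (v x)^2)"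
    by (rule set_int_lin4(2)[OF I(1) I(4) I(2) I(3), symmetric])
  finally have Geq2: "G \<epsilon> \<delta> \<kappa> v \<phi> - Eng \<epsilon> v + \<kappa>^2/2 = (LINT x:{0..1}|lborel. 1/8 * ((v x)^2 * (p x)^2) + a8 * ((v x)^4 * (sin (\<phi> x))^2) + (-\<kappa>/2) * ((v x)^2 * p x) + \<kappa>^2/2 * (v x)^2)" .
  have "l^4 * (F (\<epsilon> / sqrt \<delta>) \<kappa> \<phi> + \<kappa>^2/2) = (LINT x:{0..1}|lborel. l^4 * (1/8 * (p x)^2 + a8 * (sin (\<phi> x))^2 + (-\<kappa>/2) * p x + \<kappa>^2/2 * 1))"
    unfolding Feq2 by (rule set_integral_mult_right[symmetric])
  also have "\<dots> \<le> (LINT x:{0..1}|lborel. 1/8 * ((v x)^2 * (p x)^2) + a8 * ((v x)^4 * (sin (\<phi> x))^2) + (-\<kappa>/2) * ((v x)^2 * p x) + \<kappa>^2/2 * (v x)^2)"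
  proof (rule set_integral_mono[OF set_integrable_mult_right[OF iR] iL])
    fix x :: real assume x: "x \<in> {0..1}"
    have lv: "l \<le> v x" using vl x by simp
    have "l^2 \<le> (v x)^2" by (rule power_mono[OF lv]) (use l in simp)
    moreover have "l^4 \<le> l^2" by (rule power_decreasing) (use l in simp_all)
    ultimately have v2: "l^4 \<le> (v x)^2" by simp
    have v4: "l^4 \<le> (v x)^4" by (rule power_mono[OF lv]) (use l in simp)
    have q: "0 \<le> (p x - 2*\<kappa>)^2/8" by simp
    have sq: "0 \<le> a8 * (sin (\<phi> x))^2" using a8 by simp
    have A: "l^4 * ((p x - 2*\<kappa>)^2/8) + l^4 * (a8 * (sin (\<phi> x))^2) \<le> (v x)^2 * ((p x - 2*\<kappa>)^2/8) + (v x)^4 * (a8 * (sin (\<phi> x))^2)"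
      by (intro add_mono mult_right_mono v2 v4 q sq)
    have "l^4 * (1/8 * (p x)^2 + a8 * (sin (\<phi> x))^2 + (-\<kappa>/2) * p x + \<kappa>^2/2 * 1) = l^4 * ((p x - 2*\<kappa>)^2/8) + l^4 * (a8 * (sin (\<phi> x))^2)"
      by (simp add: power2_eq_square field_simps)
    also have "\<dots> \<le> (v x)^2 * ((p x - 2*\<kappa>)^2/8) + (v x)^4 * (a8 * (sin (\<phi> x))^2)" by (rule A)
    also have "\<dots> = 1/8 * ((v x)^2 * (p x)^2) + a8 * ((v x)^4 * (sin (\<phi> x))^2) + (-\<kappa>/2) * ((v x)^2 * p x) + \<kappa>^2/2 * (v x)^2"
      by (simp add: power2_eq_square field_simps)
    finally show "l^4 * (1/8 * (p x)^2 + a8 * (sin (\<phi> x))^2 + (-\<kappa>/2) * p x + \<kappa>^2/2 * 1)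
      \<le> 1/8 * ((v x)^2 * (p x)^2) + a8 * ((v x)^4 * (sin (\<phi> x))^2) + (-\<kappa>/2) * ((v x)^2 * p x) + \<kappa>^2/2 * (v x)^2" .
  qed
  finally show "G \<epsilon> \<delta> \<kappa> v \<phi> \<ge> Eng \<epsilon> v + l^4 * (F (\<epsilon> / sqrt \<delta>) \<kappa> \<phi> + \<kappa>^2/2) - \<kappa>^2/2"
    using Geq2 by simp
qed

lemma lin_aux: "(A::real) \<le> B/2 \<Longrightarrow> B \<le> A + C \<Longrightarrow> B/2 \<le> C" by linarith

lemma set_int_sub01:
  fixes a b :: real and f :: "real \<Rightarrow> real"
  assumes "set_integrable lborel {0..1} f" "\<And>x. 0 \<le> (f x::real)" "0 \<le> a" "a \<le> b" "b \<le> 1"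
  shows "(LINT x:{a..b}|lborel. f x) \<le> (LINT x:{0..1}|lborel. f x)"
proof -
  have i: "set_integrable lborel {a..b} f" by (rule set_integrable_subset[OF assms(1)]) (use assms in simp_all)
  show ?thesis
    unfolding set_lebesgue_integral_def
    by (rule Bochner_Integration.integral_mono)
      (use i assms(1,2,3,5) in \<open>auto simp: set_integrable_def indicator_def\<close>)
qed

lemma osc_bound:
  assumes w: "is_wderiv01 v g" and ab: "0 \<le> a" "a \<le> b" "b \<le> 1" and s: "s > 0"
  shows "\<bar>v b - v a\<bar> \<le> (1/(2 * s)) * (LINT x:{0..1}|lborel. (g x)^2) + s/2 * (b - a)"
proof -
  have ig: "set_integrable lborel {a..b} g" by (rule wd01_interval(1)[OF w ab])
  have ig2: "set_integrable lborel {a..b} (\<lambda>x. (g x)^2)"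
    by (rule set_integrable_subset[OF wd01_D(3)[OF w]]) (use ab in auto)
  have ic: "set_integrable lborel {a..b} (\<lambda>x. s/2::real)" by (rule borel_integrable_atLeastAtMost') simp
  have "\<bar>v b - v a\<bar> = \<bar>LINT x:{a..b}|lborel. g x\<bar>" using wd01_interval(2)[OF w ab] by simp
  also have "\<dots> \<le> (LINT x:{a..b}|lborel. \<bar>g x\<bar>)"
    using set_integral_norm_bound[OF ig] by simp
  also have "\<dots> \<le> (LINT x:{a..b}|lborel. (1/(2 * s)) * (g x)^2 + s/2)"
  proof (rule set_integral_mono)
    show "set_integrable lborel {a..b} (\<lambda>x. \<bar>g x\<bar>)"
      using set_integrable_norm[OF ig] by simp
    show "set_integrable lborel {a..b} (\<lambda>x. (1/(2 * s)) * (g x)^2 + s/2)"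
      by (rule set_integral_add(1)[OF set_integrable_mult_right[OF ig2] ic])
    fix x
    have "0 \<le> (\<bar>g x\<bar> - s)^2" by simp
    then have "2 * s * \<bar>g x\<bar> \<le> (g x)^2 + s^2" by (simp add: power2_eq_square algebra_simps)
    then show "\<bar>g x\<bar> \<le> (1/(2 * s)) * (g x)^2 + s/2" using s by (simp add: field_simps power2_eq_square)
  qed
  also have "\<dots> = (1/(2 * s)) * (LINT x:{a..b}|lborel. (g x)^2) + (LINT x:{a..b}|lborel. s/2)"
    by (simp only: set_integral_add(2)[OF set_integrable_mult_right[OF ig2] ic] set_integral_mult_right)
  also have "(LINT x:{a..b}|lborel. s/2) = s/2 * (b - a)" using ab by (simp add: set_lebesgue_integral_def)
  also have "(1/(2 * s)) * (LINT x:{a..b}|lborel. (g x)^2) \<le> (1/(2 * s)) * (LINT x:{0..1}|lborel. (g x)^2)"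
    using set_int_sub01[OF wd01_D(3)[OF w] _ ab] s by (intro mult_left_mono) simp_all
  finally show ?thesis by simp
qed

lemma unif_bound_aux:
  fixes v :: "real \<Rightarrow> real"
  assumes w: "is_wderiv01 v g" and v0: "\<forall>x\<in>{0..1}. v x \<ge> 0" and e: "0 < \<epsilon>" "\<epsilon> \<le> 1"
    and ep: "e' > 0"
    and D: "(LINT x:{0..1}|lborel. (g x)^2) \<le> 2 * e'"
    and Q: "(LINT x:{0..1}|lborel. (1 - (v x)^2)^2) \<le> 4 * \<epsilon>^2 * e'"
    and x: "x \<in> {0..1}"
  shows "(v x - 1)^2 \<le> 32 * \<epsilon> * e'"
proof (rule ccontr)
  assume "\<not> ?thesis"
  then have big: "(v x - 1)^2 > 32 * \<epsilon> * e'" by simp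
  define d where "d = \<bar>v x - 1\<bar>"
  have d2: "d^2 = (v x - 1)^2" unfolding d_def by simp
  have "32 * \<epsilon> * e' > 0" using e ep by simp
  then have dpos: "d > 0" using big d2 by (cases "d = 0") (auto simp: d_def)
  define l where "l = min (1/2) (d^2 / (8*e'))"
  have lpos: "l > 0" unfolding l_def using dpos ep by simp
  have lh: "l \<le> 1/2" unfolding l_def by simp
  obtain a b where ab: "0 \<le> a" "a \<le> b" "b \<le> 1" "b - a = l" "x \<in> {a..b}"
  proof (cases "x + l \<le> 1")
    case True then show ?thesis using that[of x "x+l"] x lpos by auto
  next
    case False then show ?thesis using that[of "x-l" x] x lpos lh by auto
  qed
  define s where "s = 4 * e' / d"
  have spos: "s > 0" unfolding s_def using ep dpos by simp
  have near: "\<bar>v y - v x\<bar> \<le> d/2" if y: "y \<in> {a..b}" for y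
  proof -
    have "\<bar>v y - v x\<bar> \<le> (1/(2 * s)) * (LINT x:{0..1}|lborel. (g x)^2) + s/2 * \<bar>y - x\<bar>"
    proof (cases "x \<le> y")
      case True
      then show ?thesis using osc_bound[OF w _ True _ spos] ab y \<open>x \<in> {a..b}\<close> by simp
    next
      case False
      then show ?thesis using osc_bound[OF w _ _ _ spos, of y x] ab y \<open>x \<in> {a..b}\<close> by (simp add: abs_minus_commute)
    qed
    also have "\<dots> \<le> (1/(2 * s)) * (2 * e') + s/2 * l"
    proof (intro add_mono mult_left_mono)
      show "\<bar>y - x\<bar> \<le> l" using y \<open>x \<in> {a..b}\<close> ab by auto
    qed (use D spos in simp_all)
    also have "(1/(2 * s)) * (2 * e') = d/4" unfolding s_def using ep dpos by (simp add: field_simps)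
    also have "s/2 * l \<le> s/2 * (d^2 / (8*e'))" unfolding l_def using spos by (intro mult_left_mono) simp_all
    also have "s/2 * (d^2 / (8*e')) = d/4" unfolding s_def using ep dpos by (simp add: field_simps power2_eq_square)
    finally show ?thesis by simp
  qed
  have low: "d^2/4 \<le> (1 - (v y)^2)^2" if y: "y \<in> {a..b}" for y
  proof -
    have "y \<in> {0..1}" using y ab by auto
    then have vy: "v y \<ge> 0" using v0 by simp
    have t: "\<bar>v x - 1\<bar> \<le> \<bar>v y - v x\<bar> + \<bar>v y - 1\<bar>"
      using abs_triangle_ineq[of "v x - v y" "v y - 1"] by (simp add: abs_minus_commute)
    have "d/2 \<le> \<bar>v y - 1\<bar>" using lin_aux[OF near[OF y, unfolded d_def] t] unfolding d_def .
    then have "(d/2)^2 \<le> (v y - 1)^2"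
      by (metis abs_ge_zero abs_le_square_iff abs_of_nonneg dpos less_imp_le half_gt_zero power2_abs)
    also have "(v y - 1)^2 \<le> (1 - (v y)^2)^2"
    proof -
      have "(1 - (v y)^2)^2 = (v y - 1)^2 * (v y + 1)^2" by (simp add: power2_eq_square algebra_simps)
      moreover have "1 * 1 \<le> (v y + 1) * (v y + 1)" by (rule mult_mono) (use vy in simp_all)
      then have "1 \<le> (v y + 1)^2" by (simp add: power2_eq_square)
      ultimately show ?thesis by (simp add: mult_le_cancel_left1)
    qed
    finally show ?thesis by (simp add: power_divide)
  qed
  have cQ: "continuous_on {0..1} (\<lambda>y. (1 - (v y)^2)^2)" by (intro continuous_intros wd01_cont[OF w])
  have "d^2/4 * l = (LINT y:{a..b}|lborel. d^2/4)" using ab by (simp add: set_lebesgue_integral_def)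
  also have "\<dots> \<le> (LINT y:{a..b}|lborel. (1 - (v y)^2)^2)"
  proof (rule set_integral_mono)
    show "set_integrable lborel {a..b} (\<lambda>y. d^2/4)" by (rule borel_integrable_atLeastAtMost') simp
    show "set_integrable lborel {a..b} (\<lambda>y. (1 - (v y)^2)^2)"
      by (rule set_integrable_subset[OF borel_integrable_atLeastAtMost'[OF cQ]]) (use ab in auto)
  qed (rule low)
  also have "\<dots> \<le> (LINT y:{0..1}|lborel. (1 - (v y)^2)^2)"
    by (rule set_int_sub01[OF borel_integrable_atLeastAtMost'[OF cQ] _ ab(1-3)]) simp
  also have "\<dots> \<le> 4 * \<epsilon>^2 * e'" by (rule Q)
  finally have key: "d^2/4 * l \<le> 4 * \<epsilon>^2 * e'" .
  show False
  proof (cases "1/2 \<le> d^2 / (8*e')")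
    case True
    then have lq: "l = 1/2" unfolding l_def by simp
    from key have "d^2/4 * (1/2) \<le> 4 * \<epsilon>^2 * e'" by (simp only: lq)
    then have "d^2 \<le> 32 * \<epsilon>^2 * e'" by simp
    also have "\<dots> \<le> 32 * \<epsilon> * e'" using e ep by (simp add: power2_eq_square mult_right_le_one_le)
    finally show False using big d2 by simp
  next
    case False
    then have lq: "l = d^2 / (8*e')" unfolding l_def by simp
    from key have k2: "d^2/4 * (d^2/(8*e')) \<le> 4*\<epsilon>^2*e'" by (simp only: lq)
    have "(d^2)^2 = 32*e' * (d^2/4 * (d^2/(8*e')))" using ep by (simp add: field_simps power2_eq_square)
    also have "\<dots> \<le> 32*e'*(4*\<epsilon>^2*e')" by (rule mult_left_mono[OF k2]) (use ep in simp)
    also have "\<dots> = 128 * \<epsilon>^2 * e'^2" by (simp add: power2_eq_square)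
    finally have "(d^2)^2 \<le> 128 * \<epsilon>^2 * e'^2" .
    moreover have "(32 * \<epsilon> * e')^2 < (d^2)^2"
      by (rule power_strict_mono) (use big d2 e ep in simp_all)
    moreover have "128 * \<epsilon>^2 * e'^2 \<le> (32 * \<epsilon> * e')^2" by (simp add: power_mult_distrib)
    ultimately show False by simp
  qed
qed


lemma Eng_parts:
  fixes v :: "real \<Rightarrow> real"
  shows "0 \<le> (LINT x:{0..1}|lborel. (wderiv01 v x)^2)" "0 \<le> (LINT x:{0..1}|lborel. (1 - (v x)^2)^2)"
  by (rule set_int_nonneg, simp)+

lemma Eng_nonneg: "0 \<le> Eng \<epsilon> v"
  unfolding Eng_def using Eng_parts[of v] by simp

lemma unif_bound:
  fixes v :: "real \<Rightarrow> real"
  assumes h: "H1_01 v" and v0: "\<forall>x\<in>{0..1}. v x \<ge> 0" and e: "0 < \<epsilon>" "\<epsilon> \<le> 1"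
    and x: "x \<in> {0..1}"
  shows "(v x - 1)^2 \<le> 32 * \<epsilon> * Eng \<epsilon> v"
proof (rule field_le_epsilon)
  fix t :: real assume t: "t > 0"
  define e' where "e' = Eng \<epsilon> v + t / (32 * \<epsilon>)"
  have "t / (32 * \<epsilon>) > 0" using t e by simp
  then have ep: "e' > 0" unfolding e'_def using Eng_nonneg[of \<epsilon> v] by linarith
  have w: "is_wderiv01 v (wderiv01 v)" by (rule wd01_someI[OF h])
  have P: "0 \<le> (LINT x:{0..1}|lborel. (wderiv01 v x)^2)" "0 \<le> (LINT x:{0..1}|lborel. (1 - (v x)^2)^2)"
    by (rule Eng_parts)+
  have D: "(LINT x:{0..1}|lborel. (wderiv01 v x)^2) \<le> 2 * e'"
    using P t e unfolding e'_def Eng_def by simp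
  have Q: "(LINT x:{0..1}|lborel. (1 - (v x)^2)^2) \<le> 4 * \<epsilon>^2 * e'"
  proof -
    have "(LINT x:{0..1}|lborel. (1 - (v x)^2)^2) = 4 * \<epsilon>^2 * (1/(4*\<epsilon>^2) * (LINT x:{0..1}|lborel. (1 - (v x)^2)^2))"
      using e by simp
    also have "\<dots> \<le> 4 * \<epsilon>^2 * e'"
      by (rule mult_left_mono) (use P t e in \<open>simp_all add: e'_def Eng_def\<close>)
    finally show ?thesis .
  qed
  have "(v x - 1)^2 \<le> 32 * \<epsilon> * e'" by (rule unif_bound_aux[OF w v0 e ep D Q x])
  also have "\<dots> = 32 * \<epsilon> * Eng \<epsilon> v + t" unfolding e'_def using e by (simp add: field_simps)
  finally show "(v x - 1)^2 \<le> 32 * \<epsilon> * Eng \<epsilon> v + t" .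
qed

definition k0 :: "real \<Rightarrow> real \<Rightarrow> real \<Rightarrow> real \<Rightarrow> real" where
  "k0 \<gamma> T r y = pi/2 + \<gamma> * arctan (sinh (r*y - T))"

definition k0d :: "real \<Rightarrow> real \<Rightarrow> real \<Rightarrow> real \<Rightarrow> real" where
  "k0d \<gamma> T r y = \<gamma> * r / cosh (r*y - T)"

definition R0 :: "real \<Rightarrow> real \<Rightarrow> real \<Rightarrow> real \<Rightarrow> real" where
  "R0 \<gamma> T r y = \<gamma>^2 * r * tanh (r*y - T)"

lemma cosh_pos_real: "cosh (x::real) > 0"
  using cosh_real_ge_1[of x] by linarith

lemma lin_deriv: "((\<lambda>z. r*z - T) has_real_derivative r) (at y)"
proof -
  have "((\<lambda>z. r*z - T) has_real_derivative r * 1 - 0) (at y)"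
    by (rule DERIV_diff[OF DERIV_cmult[OF DERIV_ident] DERIV_const])
  then show ?thesis by simp
qed

lemma k0_deriv: "(k0 \<gamma> T r has_real_derivative k0d \<gamma> T r y) (at y)"
proof -
  have d2: "((\<lambda>z. sinh (r*z - T)) has_real_derivative cosh (r*y - T) * r) (at y)"
    by (rule has_field_derivative_sinh[OF lin_deriv])
  have d3: "((\<lambda>z. arctan (sinh (r*z - T))) has_real_derivative inverse (1 + (sinh (r*y - T))^2) * (cosh (r*y - T) * r)) (at y)"
    by (rule DERIV_chain2[OF DERIV_arctan d2])
  have d4: "((\<lambda>z. pi/2 + \<gamma> * arctan (sinh (r*z - T))) has_real_derivative 0 + \<gamma> * (inverse (1 + (sinh (r*y - T))^2) * (cosh (r*y - T) * r))) (at y)"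
    by (rule DERIV_add[OF DERIV_const DERIV_cmult[OF d3]])
  moreover have "0 + \<gamma> * (inverse (1 + (sinh (r*y - T))^2) * (cosh (r*y - T) * r)) = k0d \<gamma> T r y"
  proof -
    have c: "1 + (sinh (r*y - T))^2 = (cosh (r*y - T))^2" using cosh_square_eq[of "r*y - T"] by simp
    have "cosh (r*y - T) \<noteq> 0" using cosh_pos_real[of "r*y-T"] by simp
    then show ?thesis unfolding k0d_def c by (simp add: field_simps power2_eq_square)
  qed
  ultimately show ?thesis unfolding k0_def by simp
qed

lemma R0_deriv: "(R0 \<gamma> T r has_real_derivative (k0d \<gamma> T r y)^2) (at y)"
proof -
  have nz: "cosh (r*y - T) \<noteq> 0" using cosh_pos_real[of "r*y-T"] by simp
  have d1: "((\<lambda>z. sinh (r*z - T)) has_real_derivative cosh (r*y - T) * r) (at y)"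
    by (rule has_field_derivative_sinh[OF lin_deriv])
  have d2: "((\<lambda>z. cosh (r*z - T)) has_real_derivative sinh (r*y - T) * r) (at y)"
    by (rule has_field_derivative_cosh[OF lin_deriv])
  have d3: "((\<lambda>z. sinh (r*z - T) / cosh (r*z - T)) has_real_derivative
      (cosh (r*y - T) * r * cosh (r*y - T) - sinh (r*y - T) * (sinh (r*y - T) * r)) / (cosh (r*y - T) * cosh (r*y - T))) (at y)"
    by (rule DERIV_divide[OF d1 d2 nz])
  have d4: "((\<lambda>z. \<gamma>^2 * r * (sinh (r*z - T) / cosh (r*z - T))) has_real_derivative
     \<gamma>^2 * r * ((cosh (r*y - T) * r * cosh (r*y - T) - sinh (r*y - T) * (sinh (r*y - T) * r)) / (cosh (r*y - T) * cosh (r*y - T)))) (at y)"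
    by (rule DERIV_cmult[OF d3])
  moreover have "\<gamma>^2 * r * ((cosh (r*y - T) * r * cosh (r*y - T) - sinh (r*y - T) * (sinh (r*y - T) * r)) / (cosh (r*y - T) * cosh (r*y - T)))
      = (k0d \<gamma> T r y)^2"
  proof -
    have c: "(cosh (r*y - T))^2 - (sinh (r*y - T))^2 = 1" using cosh_square_eq[of "r*y - T"] by simp
    have "cosh (r*y - T) * r * cosh (r*y - T) - sinh (r*y - T) * (sinh (r*y - T) * r)
       = r * ((cosh (r*y - T))^2 - (sinh (r*y - T))^2)" by (simp add: power2_eq_square algebra_simps)
    then show ?thesis unfolding k0d_def c using nz by (simp add: field_simps power2_eq_square)
  qed
  ultimately show ?thesis unfolding R0_def tanh_def by simp
qed

lemma k0_ends:
  assumes g: "\<gamma> * arctan (sinh T) = pi/2" and r: "r > 0"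
  shows "k0 \<gamma> T r 0 = 0" "k0 \<gamma> T r (2*T/r) = pi"
proof -
  show "k0 \<gamma> T r 0 = 0" unfolding k0_def using g by (simp add: arctan_minus)
  have "r * (2*T/r) - T = T" using r by simp
  then show "k0 \<gamma> T r (2*T/r) = pi" unfolding k0_def using g by simp
qed

lemma k0_sin_bound:
  assumes g1: "\<gamma> \<ge> 1" and g: "\<gamma> * arctan (sinh T) = pi/2" and r: "r > 0"
    and T: "T \<ge> 0" and y: "0 \<le> y" "y \<le> 2*T/r"
  shows "r^2 * (sin (k0 \<gamma> T r y))^2 \<le> (k0d \<gamma> T r y)^2"
proof -
  define s where "s = r*y - T"
  have sT: "\<bar>s\<bar> \<le> T"
  proof -
    have "r * y \<le> 2*T" using y r by (simp add: field_simps)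
    moreover have "0 \<le> r*y" using y r by simp
    ultimately show ?thesis unfolding s_def by simp
  qed
  define w where "w = arctan (sinh s)"
  have aw: "\<bar>w\<bar> \<le> arctan (sinh T)"
  proof -
    have "\<bar>sinh s\<bar> \<le> sinh T"
    proof -
      have "\<bar>sinh s\<bar> = sinh \<bar>s\<bar>"
        by (cases "s \<ge> 0") (simp_all add: sinh_minus abs_if sinh_real_nonneg_iff sinh_real_neg_iff)
      moreover have "sinh \<bar>s\<bar> \<le> sinh T" using sT by (simp only: sinh_real_le_iff)
      ultimately show ?thesis by linarith
    qed
    then have "arctan \<bar>sinh s\<bar> \<le> arctan (sinh T)" by (simp add: arctan_le_iff)
    moreover have "\<bar>w\<bar> = arctan \<bar>sinh s\<bar>" unfolding w_def by (simp add: abs_if arctan_minus arctan_less_zero_iff)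
    ultimately show ?thesis by simp
  qed
  have gw: "\<gamma> * \<bar>w\<bar> \<le> pi/2"
  proof -
    have "\<gamma> * \<bar>w\<bar> \<le> \<gamma> * arctan (sinh T)" using aw g1 by (intro mult_left_mono) simp_all
    then show ?thesis using g by simp
  qed
  have ww: "\<bar>w\<bar> \<le> \<gamma> * \<bar>w\<bar>" using g1 by (simp add: mult_le_cancel_right1)
  have gw0: "0 \<le> \<gamma> * \<bar>w\<bar>" using g1 by simp
  have c1: "cos (\<gamma> * \<bar>w\<bar>) \<le> cos \<bar>w\<bar>"
  proof (rule cos_monotone_0_pi_le)
    show "0 \<le> \<bar>w\<bar>" by simp
    show "\<bar>w\<bar> \<le> \<gamma> * \<bar>w\<bar>" by (rule ww)
    show "\<gamma> * \<bar>w\<bar> \<le> pi" using gw pi_gt3 by linarith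
  qed
  have c0: "0 \<le> cos (\<gamma> * \<bar>w\<bar>)"
    by (rule cos_ge_zero) (use gw gw0 pi_gt3 in linarith)+
  have sk: "sin (k0 \<gamma> T r y) = cos (\<gamma> * \<bar>w\<bar>)"
  proof -
    have "sin (k0 \<gamma> T r y) = cos (\<gamma> * w)" unfolding k0_def w_def s_def by (simp add: sin_add)
    also have "\<dots> = cos (\<gamma> * \<bar>w\<bar>)" by (simp add: abs_if)
    finally show ?thesis .
  qed
  have "(sin (k0 \<gamma> T r y))^2 \<le> (cos \<bar>w\<bar>)^2" unfolding sk by (rule power_mono[OF c1 c0])
  also have "(cos \<bar>w\<bar>)^2 = 1 / (cosh s)^2"
  proof -
    have "(cos \<bar>w\<bar>)^2 = (cos w)^2" by (simp add: abs_if)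
    also have "\<dots> = 1 / (1 + (sinh s)^2)" unfolding w_def cos_arctan by (simp add: power_divide)
    also have "1 + (sinh s)^2 = (cosh s)^2" using cosh_square_eq[of s] by simp
    finally show ?thesis .
  qed
  finally have A: "(sin (k0 \<gamma> T r y))^2 \<le> 1 / (cosh s)^2" .
  have "r^2 * (sin (k0 \<gamma> T r y))^2 \<le> r^2 * (1 / (cosh s)^2)" by (rule mult_left_mono[OF A]) simp
  also have "\<dots> \<le> \<gamma>^2 * (r^2 * (1 / (cosh s)^2))"
  proof -
    have "1 \<le> \<gamma>^2" using g1 by (simp add: one_le_power)
    then have "1 * (r^2 * (1 / (cosh s)^2)) \<le> \<gamma>^2 * (r^2 * (1 / (cosh s)^2))"
      by (rule mult_right_mono) simp
    then show ?thesis by simp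
  qed
  also have "\<dots> = (k0d \<gamma> T r y)^2" unfolding k0d_def s_def by (simp add: power_divide power_mult_distrib)
  finally show ?thesis .
qed

definition clampT :: "real \<Rightarrow> real \<Rightarrow> real" where
  "clampT \<tau> y = max 0 (min \<tau> y)"

definition slotT :: "real \<Rightarrow> nat \<Rightarrow> real \<Rightarrow> bool" where
  "slotT \<tau> k x \<longleftrightarrow> real k * \<tau> < x \<and> x < real k * \<tau> + \<tau>"

lemma clamp_cont: "continuous_on UNIV (clampT \<tau>)"
  unfolding clampT_def by (intro continuous_intros)

lemma clamp_le0: "y \<le> 0 \<Longrightarrow> 0 \<le> \<tau> \<Longrightarrow> clampT \<tau> y = 0"
  unfolding clampT_def by simp

lemma clamp_mid: "0 \<le> y \<Longrightarrow> y \<le> \<tau> \<Longrightarrow> clampT \<tau> y = y"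
  unfolding clampT_def by simp

lemma clamp_ge: "\<tau> \<le> y \<Longrightarrow> 0 \<le> \<tau> \<Longrightarrow> clampT \<tau> y = \<tau>"
  unfolding clampT_def by simp

lemma clamp_term_deriv:
  fixes f f' :: "real \<Rightarrow> real"
  assumes d: "\<And>y. (f has_real_derivative f' y) (at y)" and t: "\<tau> > 0"
    and x1: "x - c \<noteq> 0" and x2: "x - c \<noteq> \<tau>"
  shows "((\<lambda>y. f (clampT \<tau> (y - c))) has_real_derivative (if c < x \<and> x < c + \<tau> then f' (x - c) else 0)) (at x)"
proof (cases "x < c")
  case True
  have "((\<lambda>y. f 0) has_real_derivative 0) (at x)" by (rule DERIV_const)
  then have "((\<lambda>y. f (clampT \<tau> (y - c))) has_real_derivative 0) (at x)"
    by (rule has_field_derivative_transform_within_open[of _ _ _ "{..<c}"])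
       (use True t in \<open>simp_all add: clamp_le0\<close>)
  then show ?thesis using True by simp
next
  case False
  show ?thesis
  proof (cases "x < c + \<tau>")
    case True
    with False x1 have in1: "c < x" by auto
    have "((\<lambda>y. y - c) has_real_derivative 1 - 0) (at x)" by (rule DERIV_diff[OF DERIV_ident DERIV_const])
    then have "((\<lambda>y. f (y - c)) has_real_derivative f' (x - c) * (1 - 0)) (at x)"
      by (rule DERIV_chain2[OF d])
    then have "((\<lambda>y. f (y - c)) has_real_derivative f' (x - c)) (at x)" by simp
    then have "((\<lambda>y. f (clampT \<tau> (y - c))) has_real_derivative f' (x - c)) (at x)"
      by (rule has_field_derivative_transform_within_open[of _ _ _ "{c<..<c+\<tau>}"])
         (use True in1 t in \<open>simp_all add: clamp_mid\<close>)
    then show ?thesis using True in1 by simp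
  next
    case False2: False
    with x2 have gt: "x > c + \<tau>" by auto
    have "((\<lambda>y. f \<tau>) has_real_derivative 0) (at x)" by (rule DERIV_const)
    then have "((\<lambda>y. f (clampT \<tau> (y - c))) has_real_derivative 0) (at x)"
      by (rule has_field_derivative_transform_within_open[of _ _ _ "{c+\<tau><..}"])
         (use gt t in \<open>simp_all add: clamp_ge\<close>)
    then show ?thesis using gt by simp
  qed
qed

lemma slot_unique:
  assumes t: "\<tau> > 0" and "slotT \<tau> j x" "slotT \<tau> k x"
  shows "j = k"
proof -
  have "real j * \<tau> < real k * \<tau> + \<tau>" "real k * \<tau> < real j * \<tau> + \<tau>"
    using assms(2,3) unfolding slotT_def by linarith+
  then have "real j * \<tau> < (real k + 1) * \<tau>" "real k * \<tau> < (real j + 1) * \<tau>"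
    by (simp_all add: algebra_simps)
  then have "real j < real k + 1" "real k < real j + 1" using t by (simp_all add: mult_less_cancel_right)
  then show ?thesis by linarith
qed

lemma sum_slot_cases:
  assumes t: "\<tau> > 0"
  shows "(\<forall>k<n. \<not> slotT \<tau> k x) \<or>
    (\<exists>j<n. slotT \<tau> j x \<and> (\<forall>h :: nat \<Rightarrow> real. (\<Sum>k<n. if slotT \<tau> k x then h k else 0) = h j))"
proof (cases "\<exists>j<n. slotT \<tau> j x")
  case True
  then obtain j where j: "j < n" "slotT \<tau> j x" by blast
  have "(\<Sum>k<n. if slotT \<tau> k x then h k else 0) = h j" for h :: "nat \<Rightarrow> real"
  proof -
    have "(\<Sum>k<n. if slotT \<tau> k x then h k else 0) = (\<Sum>k<n. if k = j then h j else 0)"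
      by (rule sum.cong) (use slot_unique[OF t] j in auto)
    also have "\<dots> = h j" using j by simp
    finally show ?thesis .
  qed
  then show ?thesis using j by blast
qed auto

lemma sin_sq_shift:
  fixes n :: nat and c :: "nat \<Rightarrow> real"
  assumes "\<forall>k<n. c k = 0 \<or> c k = pi"
  shows "(sin (t + (\<Sum>k<n. c k)))^2 = (sin t)^2"
  using assms
proof (induction n)
  case 0 then show ?case by simp
next
  case (Suc n)
  then have ih: "(sin (t + (\<Sum>k<n. c k)))^2 = (sin t)^2" by simp
  have cn: "c n = 0 \<or> c n = pi" using Suc.prems by simp
  have "t + (\<Sum>k<Suc n. c k) = (t + (\<Sum>k<n. c k)) + c n" by simp
  moreover have "(sin ((t + (\<Sum>k<n. c k)) + c n))^2 = (sin (t + (\<Sum>k<n. c k)))^2"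
    using cn by (auto simp: sin_periodic_pi)
  ultimately show ?case using ih by (simp add: add.assoc)
qed


definition psiT :: "real \<Rightarrow> real \<Rightarrow> real \<Rightarrow> real \<Rightarrow> nat \<Rightarrow> real \<Rightarrow> real" where
  "psiT \<gamma> T r \<tau> n x = (\<Sum>k<n. k0 \<gamma> T r (clampT \<tau> (x - real k * \<tau>)))"

definition gT :: "real \<Rightarrow> real \<Rightarrow> real \<Rightarrow> real \<Rightarrow> nat \<Rightarrow> real \<Rightarrow> real" where
  "gT \<gamma> T r \<tau> n x = (\<Sum>k<n. if slotT \<tau> k x then k0d \<gamma> T r (x - real k * \<tau>) else 0)"

definition RT :: "real \<Rightarrow> real \<Rightarrow> real \<Rightarrow> real \<Rightarrow> nat \<Rightarrow> real \<Rightarrow> real" where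
  "RT \<gamma> T r \<tau> n x = (\<Sum>k<n. R0 \<gamma> T r (clampT \<tau> (x - real k * \<tau>)))"

definition gridT :: "real \<Rightarrow> nat \<Rightarrow> real set" where
  "gridT \<tau> n = (\<lambda>k. real k * \<tau>) ` {..n}"

lemma grid_finite: "finite (gridT \<tau> n)" unfolding gridT_def by simp

lemma off_grid:
  assumes "x \<notin> gridT \<tau> n" "k < n"
  shows "x - real k * \<tau> \<noteq> 0" "x - real k * \<tau> \<noteq> \<tau>"
proof -
  have "real k * \<tau> \<in> gridT \<tau> n" unfolding gridT_def using assms(2) by auto
  moreover have "real (Suc k) * \<tau> \<in> gridT \<tau> n" unfolding gridT_def
    by (rule image_eqI[of _ _ "Suc k"]) (use assms(2) in simp_all)
  ultimately have "real k * \<tau> \<in> gridT \<tau> n" "real (Suc k) * \<tau> \<in> gridT \<tau> n" by blast+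
  then show "x - real k * \<tau> \<noteq> 0" "x - real k * \<tau> \<noteq> \<tau>" using assms(1) by (auto simp: algebra_simps)
qed

lemma gT_sq:
  assumes t: "\<tau> > 0"
  shows "(gT \<gamma> T r \<tau> n x)^2 = (\<Sum>k<n. if slotT \<tau> k x then (k0d \<gamma> T r (x - real k * \<tau>))^2 else 0)"
  using sum_slot_cases[OF t, of n x] unfolding gT_def by auto

lemma psiT_deriv:
  assumes t: "\<tau> > 0" and x: "x \<notin> gridT \<tau> n"
  shows "(psiT \<gamma> T r \<tau> n has_real_derivative gT \<gamma> T r \<tau> n x) (at x)"
proof -
  have "((\<lambda>x. \<Sum>k<n. k0 \<gamma> T r (clampT \<tau> (x - real k * \<tau>))) has_real_derivative
     (\<Sum>k<n. if slotT \<tau> k x then k0d \<gamma> T r (x - real k * \<tau>) else 0)) (at x)"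
  proof (rule DERIV_sum)
    fix k assume "k \<in> {..<n}"
    then have k: "k < n" by simp
    have "((\<lambda>y. k0 \<gamma> T r (clampT \<tau> (y - real k * \<tau>))) has_real_derivative
      (if real k * \<tau> < x \<and> x < real k * \<tau> + \<tau> then k0d \<gamma> T r (x - real k * \<tau>) else 0)) (at x)"
      by (rule clamp_term_deriv[OF k0_deriv t off_grid[OF x k]])
    then show "((\<lambda>y. k0 \<gamma> T r (clampT \<tau> (y - real k * \<tau>))) has_real_derivative
      (if slotT \<tau> k x then k0d \<gamma> T r (x - real k * \<tau>) else 0)) (at x)"
      unfolding slotT_def .
  qed
  then show ?thesis unfolding psiT_def gT_def .
qed

lemma RT_deriv:
  assumes t: "\<tau> > 0" and x: "x \<notin> gridT \<tau> n"
  shows "(RT \<gamma> T r \<tau> n has_real_derivative (gT \<gamma> T r \<tau> n x)^2) (at x)"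
proof -
  have "((\<lambda>x. \<Sum>k<n. R0 \<gamma> T r (clampT \<tau> (x - real k * \<tau>))) has_real_derivative
     (\<Sum>k<n. if slotT \<tau> k x then (k0d \<gamma> T r (x - real k * \<tau>))^2 else 0)) (at x)"
  proof (rule DERIV_sum)
    fix k assume "k \<in> {..<n}"
    then have k: "k < n" by simp
    have "((\<lambda>y. R0 \<gamma> T r (clampT \<tau> (y - real k * \<tau>))) has_real_derivative
      (if real k * \<tau> < x \<and> x < real k * \<tau> + \<tau> then (k0d \<gamma> T r (x - real k * \<tau>))^2 else 0)) (at x)"
      by (rule clamp_term_deriv[OF R0_deriv t off_grid[OF x k]])
    then show "((\<lambda>y. R0 \<gamma> T r (clampT \<tau> (y - real k * \<tau>))) has_real_derivative
      (if slotT \<tau> k x then (k0d \<gamma> T r (x - real k * \<tau>))^2 else 0)) (at x)"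
      unfolding slotT_def .
  qed
  then show ?thesis unfolding RT_def gT_sq[OF t] .
qed

lemma k0_cont: "continuous_on UNIV (k0 \<gamma> T r)"
  by (rule continuous_at_imp_continuous_on) (auto intro: DERIV_isCont[OF k0_deriv])

lemma R0_cont: "continuous_on UNIV (R0 \<gamma> T r)"
  by (rule continuous_at_imp_continuous_on) (auto intro: DERIV_isCont[OF R0_deriv])

lemma clamp_comp_cont:
  assumes "continuous_on UNIV f"
  shows "continuous_on UNIV (\<lambda>x. f (clampT \<tau> (x - c)))"
proof -
  have "continuous_on UNIV (\<lambda>x. clampT \<tau> (x - c))" unfolding clampT_def by (intro continuous_intros)
  then show ?thesis by (rule continuous_on_compose2[OF assms]) simp
qed

lemma psiT_cont: "continuous_on UNIV (psiT \<gamma> T r \<tau> n)"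
  unfolding psiT_def by (intro continuous_on_sum clamp_comp_cont k0_cont)

lemma RT_cont: "continuous_on UNIV (RT \<gamma> T r \<tau> n)"
  unfolding RT_def by (intro continuous_on_sum clamp_comp_cont R0_cont)

lemma psiT_FTC:
  assumes t: "\<tau> > 0" and x: "0 \<le> x"
  shows "(gT \<gamma> T r \<tau> n has_integral psiT \<gamma> T r \<tau> n x - psiT \<gamma> T r \<tau> n 0) {0..x}"
proof (rule fundamental_theorem_of_calculus_strong[OF grid_finite x])
  fix y assume "y \<in> {0..x} - gridT \<tau> n"
  then show "(psiT \<gamma> T r \<tau> n has_vector_derivative gT \<gamma> T r \<tau> n y) (at y)"
    using psiT_deriv[OF t] by (simp add: has_real_derivative_iff_has_vector_derivative[symmetric])
next
  show "continuous_on {0..x} (psiT \<gamma> T r \<tau> n)" by (rule continuous_on_subset[OF psiT_cont]) simp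
qed

lemma RT_FTC:
  assumes t: "\<tau> > 0"
  shows "((\<lambda>x. (gT \<gamma> T r \<tau> n x)^2) has_integral RT \<gamma> T r \<tau> n 1 - RT \<gamma> T r \<tau> n 0) {0..1}"
proof (rule fundamental_theorem_of_calculus_strong[OF grid_finite])
  fix y assume "y \<in> {0..1} - gridT \<tau> n"
  then show "(RT \<gamma> T r \<tau> n has_vector_derivative (gT \<gamma> T r \<tau> n y)^2) (at y)"
    using RT_deriv[OF t] by (simp add: has_real_derivative_iff_has_vector_derivative[symmetric])
next
  show "continuous_on {0..1} (RT \<gamma> T r \<tau> n)" by (rule continuous_on_subset[OF RT_cont]) simp
qed simp


lemma k0d_bound:
  assumes "\<gamma> \<ge> 0" "r \<ge> 0"
  shows "\<bar>k0d \<gamma> T r y\<bar> \<le> \<gamma> * r"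
proof -
  have c: "1 \<le> cosh (r*y - T)" by (rule cosh_real_ge_1)
  have nn: "0 \<le> \<gamma> * r" using assms by simp
  have "\<bar>k0d \<gamma> T r y\<bar> = \<gamma> * r / cosh (r*y - T)" unfolding k0d_def using nn c by simp
  also have "\<dots> \<le> \<gamma> * r / 1" by (rule divide_left_mono[OF c nn]) (use c in simp)
  finally show ?thesis by simp
qed

lemma gT_bound:
  assumes t: "\<tau> > 0" and "\<gamma> \<ge> 0" "r \<ge> 0"
  shows "\<bar>gT \<gamma> T r \<tau> n x\<bar> \<le> \<gamma> * r"
proof -
  have nn: "0 \<le> \<gamma> * r" using assms by simp
  from sum_slot_cases[OF t, of n x] show ?thesis
  proof
    assume "\<forall>k<n. \<not> slotT \<tau> k x"
    then have "gT \<gamma> T r \<tau> n x = 0" unfolding gT_def by simp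
    then show ?thesis using nn by simp
  next
    assume "\<exists>j<n. slotT \<tau> j x \<and> (\<forall>h :: nat \<Rightarrow> real. (\<Sum>k<n. if slotT \<tau> k x then h k else 0) = h j)"
    then obtain j where H: "\<forall>h :: nat \<Rightarrow> real. (\<Sum>k<n. if slotT \<tau> k x then h k else 0) = h j"
      by blast
    have "gT \<gamma> T r \<tau> n x = k0d \<gamma> T r (x - real j * \<tau>)"
      unfolding gT_def using H[rule_format, of "\<lambda>k. k0d \<gamma> T r (x - real k * \<tau>)"] by simp
    then show ?thesis using k0d_bound[OF assms(2,3)] by simp
  qed
qed

lemma gT_meas: "gT \<gamma> T r \<tau> n \<in> borel_measurable lborel"
proof -
  have m: "(\<lambda>x. k0d \<gamma> T r (x - real k * \<tau>)) \<in> borel_measurable borel" for k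
  proof (rule borel_measurable_continuous_onI)
    have "\<And>x. cosh (r * (x - real k * \<tau>) - T) \<noteq> 0" using cosh_pos_real by (metis less_irrefl)
    then show "continuous_on UNIV (\<lambda>x. k0d \<gamma> T r (x - real k * \<tau>))"
      unfolding k0d_def by (intro continuous_intros) auto
  qed
  have "(\<lambda>x. if slotT \<tau> k x then k0d \<gamma> T r (x - real k * \<tau>) else 0) \<in> borel_measurable borel" for k
    unfolding slotT_def using m[of k] by measurable
  then have "(\<lambda>x. \<Sum>k<n. if slotT \<tau> k x then k0d \<gamma> T r (x - real k * \<tau>) else 0) \<in> borel_measurable borel"
    by (intro borel_measurable_sum) auto
  then show ?thesis unfolding gT_def by simp
qed

lemma bounded_set_int01:
  fixes f :: "real \<Rightarrow> real"
  assumes m: "f \<in> borel_measurable lborel" and b: "\<And>x. \<bar>f x\<bar> \<le> B"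
  shows "set_integrable lborel {0..1} f"
proof (rule set_integrable_bound[OF set_int_constU[of "{0..1}" B]])
  show "set_borel_measurable lborel {0..1} f" unfolding set_borel_measurable_def using m by measurable
  show "AE x in lborel. x \<in> {0..1} \<longrightarrow> norm (f x) \<le> norm B"
    using b by (intro AE_I2) (auto intro: order.trans[OF _ abs_ge_self])
qed simp_all

lemma psiT_wd:
  assumes t: "\<tau> > 0" and g: "\<gamma> \<ge> 0" and r: "r \<ge> 0"
  shows "is_wderiv01 (psiT \<gamma> T r \<tau> n) (gT \<gamma> T r \<tau> n)"
proof -
  have m[measurable]: "gT \<gamma> T r \<tau> n \<in> borel_measurable lborel" by (rule gT_meas)
  have i1: "set_integrable lborel {0..1} (gT \<gamma> T r \<tau> n)"
    by (rule bounded_set_int01[OF m gT_bound[OF t g r]])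
  have i2: "set_integrable lborel {0..1} (\<lambda>x. (gT \<gamma> T r \<tau> n x)^2)"
  proof (rule bounded_set_int01)
    show "(\<lambda>x. (gT \<gamma> T r \<tau> n x)^2) \<in> borel_measurable lborel" by measurable
    fix x
    have "\<bar>gT \<gamma> T r \<tau> n x\<bar>^2 \<le> (\<gamma> * r)^2" by (rule power_mono[OF gT_bound[OF t g r]]) simp
    then show "\<bar>(gT \<gamma> T r \<tau> n x)^2\<bar> \<le> (\<gamma> * r)^2" by simp
  qed
  have e: "psiT \<gamma> T r \<tau> n x = psiT \<gamma> T r \<tau> n 0 + (LINT t:{0..x}|lborel. gT \<gamma> T r \<tau> n t)" if x: "x \<in> {0..1}" for x
  proof -
    have ix: "set_integrable lborel {0..x} (gT \<gamma> T r \<tau> n)"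
      by (rule set_integrable_subset[OF i1]) (use x in simp_all)
    have "(LINT t:{0..x}|lborel. gT \<gamma> T r \<tau> n t) = integral {0..x} (gT \<gamma> T r \<tau> n)"
      by (rule set_borel_integral_eq_integral(2)[OF ix])
    also have "\<dots> = psiT \<gamma> T r \<tau> n x - psiT \<gamma> T r \<tau> n 0"
      by (rule integral_unique[OF psiT_FTC[OF t]]) (use x in simp)
    finally show ?thesis by simp
  qed
  show ?thesis unfolding is_wderiv01_def using m i1 i2 e by blast
qed

lemma gT_sq_int:
  assumes t: "\<tau> > 0" and g: "\<gamma> \<ge> 0" and r: "r \<ge> 0"
  shows "(LINT x:{0..1}|lborel. (gT \<gamma> T r \<tau> n x)^2) = RT \<gamma> T r \<tau> n 1 - RT \<gamma> T r \<tau> n 0"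
proof -
  have i2: "set_integrable lborel {0..1} (\<lambda>x. (gT \<gamma> T r \<tau> n x)^2)"
    using wd01_D(3)[OF psiT_wd[OF t g r]] .
  have "(LINT x:{0..1}|lborel. (gT \<gamma> T r \<tau> n x)^2) = integral {0..1} (\<lambda>x. (gT \<gamma> T r \<tau> n x)^2)"
    by (rule set_borel_integral_eq_integral(2)[OF i2])
  also have "\<dots> = RT \<gamma> T r \<tau> n 1 - RT \<gamma> T r \<tau> n 0" by (rule integral_unique[OF RT_FTC[OF t]])
  finally show ?thesis .
qed


lemma psiT_0:
  assumes t: "\<tau> > 0" and e0: "k0 \<gamma> T r 0 = 0"
  shows "psiT \<gamma> T r \<tau> n 0 = 0"
proof -
  have "k0 \<gamma> T r (clampT \<tau> (0 - real k * \<tau>)) = 0" for k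
    using clamp_le0[of "0 - real k * \<tau>" \<tau>] t e0 by simp
  then show ?thesis unfolding psiT_def by simp
qed

lemma psiT_1:
  assumes t: "\<tau> > 0" and e1: "k0 \<gamma> T r \<tau> = pi" and n: "real n * \<tau> \<le> 1"
  shows "psiT \<gamma> T r \<tau> n 1 = real n * pi"
proof -
  have "k0 \<gamma> T r (clampT \<tau> (1 - real k * \<tau>)) = pi" if k: "k < n" for k
  proof -
    have "real (Suc k) \<le> real n" using k by simp
    then have "real (Suc k) * \<tau> \<le> real n * \<tau>" using t by (intro mult_right_mono) simp_all
    then have "\<tau> \<le> 1 - real k * \<tau>" using n by (simp add: algebra_simps)
    then show ?thesis using clamp_ge[of \<tau> "1 - real k * \<tau>"] t e1 by simp
  qed
  then show ?thesis unfolding psiT_def by simp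
qed

lemma RT_diff:
  assumes t: "\<tau> > 0" and n: "real n * \<tau> \<le> 1"
  shows "RT \<gamma> T r \<tau> n 1 - RT \<gamma> T r \<tau> n 0 = real n * (R0 \<gamma> T r \<tau> - R0 \<gamma> T r 0)"
proof -
  have a: "R0 \<gamma> T r (clampT \<tau> (1 - real k * \<tau>)) = R0 \<gamma> T r \<tau>" if k: "k < n" for k
  proof -
    have "real (Suc k) \<le> real n" using k by simp
    then have "real (Suc k) * \<tau> \<le> real n * \<tau>" using t by (intro mult_right_mono) simp_all
    then have "\<tau> \<le> 1 - real k * \<tau>" using n by (simp add: algebra_simps)
    then show ?thesis using clamp_ge[of \<tau> "1 - real k * \<tau>"] t by simp
  qed
  have b: "R0 \<gamma> T r (clampT \<tau> (0 - real k * \<tau>)) = R0 \<gamma> T r 0" for k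
    using clamp_le0[of "0 - real k * \<tau>" \<tau>] t by simp
  have "RT \<gamma> T r \<tau> n 1 - RT \<gamma> T r \<tau> n 0 = (\<Sum>k<n. R0 \<gamma> T r \<tau> - R0 \<gamma> T r 0)"
    unfolding RT_def sum_subtractf[symmetric] using a b by (intro sum.cong) simp_all
  then show ?thesis by simp
qed

lemma psiT_sin_bound:
  assumes g1: "\<gamma> \<ge> 1" and g: "\<gamma> * arctan (sinh T) = pi/2" and r: "r > 0" and T: "T > 0"
  shows "r^2 * (sin (psiT \<gamma> T r (2*T/r) n x))^2 \<le> (gT \<gamma> T r (2*T/r) n x)^2"
proof -
  define \<tau> where "\<tau> = 2*T/r"
  have t: "\<tau> > 0" unfolding \<tau>_def using r T by simp
  note ends = k0_ends[OF g r]
  define a where "a k = (if slotT \<tau> k x then k0 \<gamma> T r (x - real k * \<tau>) else 0)" for k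
  define c where "c k = (if slotT \<tau> k x then 0 else if \<tau> \<le> x - real k * \<tau> then pi else 0)" for k
  have dec: "k0 \<gamma> T r (clampT \<tau> (x - real k * \<tau>)) = a k + c k" for k
  proof (cases "slotT \<tau> k x")
    case True
    then have "0 \<le> x - real k * \<tau>" "x - real k * \<tau> \<le> \<tau>" unfolding slotT_def by auto
    then show ?thesis using True clamp_mid unfolding a_def c_def by simp
  next
    case False
    show ?thesis
    proof (cases "\<tau> \<le> x - real k * \<tau>")
      case True
      then show ?thesis using False clamp_ge[OF True] t ends(2) unfolding a_def c_def \<tau>_def by simp
    next
      case F2: False
      with False have "x - real k * \<tau> \<le> 0" unfolding slotT_def by auto
      then show ?thesis using False F2 clamp_le0[of "x - real k * \<tau>" \<tau>] t ends(1) unfolding a_def c_def by simp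
    qed
  qed
  have "psiT \<gamma> T r \<tau> n x = (\<Sum>k<n. a k) + (\<Sum>k<n. c k)"
    unfolding psiT_def dec by (rule sum.distrib)
  then have s: "(sin (psiT \<gamma> T r \<tau> n x))^2 = (sin (\<Sum>k<n. a k))^2"
    using sin_sq_shift[of n c "\<Sum>k<n. a k"] unfolding c_def by simp
  from sum_slot_cases[OF t, of n x] show ?thesis
  proof
    assume "\<forall>k<n. \<not> slotT \<tau> k x"
    then have "(\<Sum>k<n. a k) = 0" unfolding a_def by simp
    then show ?thesis using s unfolding \<tau>_def by simp
  next
    assume "\<exists>j<n. slotT \<tau> j x \<and> (\<forall>h :: nat \<Rightarrow> real. (\<Sum>k<n. if slotT \<tau> k x then h k else 0) = h j)"
    then obtain j where j: "slotT \<tau> j x" and H: "\<forall>h :: nat \<Rightarrow> real. (\<Sum>k<n. if slotT \<tau> k x then h k else 0) = h j"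
      by blast
    have A: "(\<Sum>k<n. a k) = k0 \<gamma> T r (x - real j * \<tau>)"
      unfolding a_def using H[rule_format, of "\<lambda>k. k0 \<gamma> T r (x - real k * \<tau>)"] by simp
    have Gj: "gT \<gamma> T r \<tau> n x = k0d \<gamma> T r (x - real j * \<tau>)"
      unfolding gT_def using H[rule_format, of "\<lambda>k. k0d \<gamma> T r (x - real k * \<tau>)"] by simp
    have y: "0 \<le> x - real j * \<tau>" "x - real j * \<tau> \<le> 2*T/r" using j unfolding slotT_def \<tau>_def by auto
    have "r^2 * (sin (k0 \<gamma> T r (x - real j * \<tau>)))^2 \<le> (k0d \<gamma> T r (x - real j * \<tau>))^2"
      by (rule k0_sin_bound[OF g1 g r _ y]) (use T in simp)
    then show ?thesis using s A Gj unfolding \<tau>_def by simp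
  qed
qed

lemma F_psiT_bound:
  assumes g1: "\<gamma> \<ge> 1" and g: "\<gamma> * arctan (sinh T) = pi/2" and r: "r > 0" and T: "T > 0"
    and n: "real n * (2*T/r) \<le> 1"
  shows "psiT \<gamma> T r (2*T/r) n \<in> J_class"
    "F (1/r) (kt * r) (psiT \<gamma> T r (2*T/r) n) \<le> real n * r * (\<gamma>^2 - kt * pi) / 2"
proof -
  define \<tau> where "\<tau> = 2*T/r"
  have t: "\<tau> > 0" unfolding \<tau>_def using r T by simp
  note ends = k0_ends[OF g r]
  define \<psi> where "\<psi> = psiT \<gamma> T r \<tau> n"
  define gg where "gg = gT \<gamma> T r \<tau> n"
  have wd: "is_wderiv01 \<psi> gg" unfolding \<psi>_def gg_def by (rule psiT_wd[OF t]) (use g1 r in simp_all)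
  have h: "H1_01 \<psi>" using wd unfolding H1_01_def by blast
  have p0: "\<psi> 0 = 0" unfolding \<psi>_def by (rule psiT_0[OF t ends(1)])
  have p1: "\<psi> 1 = real n * pi" unfolding \<psi>_def by (rule psiT_1[OF t ends(2)[folded \<tau>_def] n[folded \<tau>_def]])
  show "psiT \<gamma> T r (2*T/r) n \<in> J_class" using h p0 unfolding J_class_def \<psi>_def \<tau>_def by simp
  have w: "is_wderiv01 \<psi> (wderiv01 \<psi>)" by (rule wd01_someI[OF h])
  have I1: "(LINT x:{0..1}|lborel. wderiv01 \<psi> x) = real n * pi"
    using wd01_interval(2)[OF w, of 0 1] p0 p1 by simp
  have ae: "AE x in lborel. x \<in> {0..1} \<longrightarrow> wderiv01 \<psi> x = gg x" by (rule wd01_unique[OF w wd])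
  have wm[measurable]: "wderiv01 \<psi> \<in> borel_measurable lborel" by (rule wd01_D(1)[OF w])
  have gm[measurable]: "gg \<in> borel_measurable lborel" by (rule wd01_D(1)[OF wd])
  have I2: "(LINT x:{0..1}|lborel. (wderiv01 \<psi> x)^2) = (LINT x:{0..1}|lborel. (gg x)^2)"
    by (rule set_lebesgue_integral_cong_AE) (use ae in \<open>auto elim!: eventually_mono\<close>)
  have G2: "(LINT x:{0..1}|lborel. (gg x)^2) = real n * (R0 \<gamma> T r \<tau> - R0 \<gamma> T r 0)"
  proof -
    have "(LINT x:{0..1}|lborel. (gg x)^2) = RT \<gamma> T r \<tau> n 1 - RT \<gamma> T r \<tau> n 0"
      unfolding gg_def by (rule gT_sq_int[OF t]) (use g1 r in simp_all)
    also have "\<dots> = real n * (R0 \<gamma> T r \<tau> - R0 \<gamma> T r 0)" by (rule RT_diff[OF t n[folded \<tau>_def]])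
    finally show ?thesis .
  qed
  have R: "R0 \<gamma> T r \<tau> - R0 \<gamma> T r 0 \<le> 2 * \<gamma>^2 * r"
  proof -
    have "r * \<tau> - T = T" unfolding \<tau>_def using r by simp
    then have "R0 \<gamma> T r \<tau> - R0 \<gamma> T r 0 = \<gamma>^2 * r * (2 * tanh T)"
      unfolding R0_def by (simp add: tanh_minus algebra_simps)
    also have "\<dots> \<le> \<gamma>^2 * r * 2"
      using tanh_real_lt_1[of T] r by (intro mult_left_mono) simp_all
    finally show ?thesis by simp
  qed
  have cf: "continuous_on {0..1} \<psi>" by (rule wd01_cont[OF wd])
  have s1: "set_integrable lborel {0..1::real} (\<lambda>x. (sin (\<psi> x))^2 * r^2)" by (rule cont_sin_sq[OF cf])
  have S: "r^2 * (LINT x:{0..1}|lborel. (sin (\<psi> x))^2) \<le> (LINT x:{0..1}|lborel. (gg x)^2)"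
  proof -
    have "r^2 * (LINT x:{0..1}|lborel. (sin (\<psi> x))^2) = (LINT x:{0..1}|lborel. (sin (\<psi> x))^2 * r^2)"
    proof -
      have "(LINT x:{0..1}|lborel. (sin (\<psi> x))^2 * r^2) = (LINT x:{0..1}|lborel. (sin (\<psi> x))^2) * r^2"
        by (rule set_integral_mult_left)
      then show ?thesis by (simp add: mult.commute)
    qed
    also have "\<dots> \<le> (LINT x:{0..1}|lborel. (gg x)^2)"
    proof (rule set_integral_mono[OF s1 wd01_D(3)[OF wd]])
      fix x :: real
      show "(sin (\<psi> x))^2 * r^2 \<le> (gg x)^2"
        using psiT_sin_bound[OF g1 g r T, of n x] unfolding \<psi>_def gg_def \<tau>_def by (simp add: mult.commute)
    qed
    finally show ?thesis .
  qed
  have rr: "1 / (1/r)^2 = r^2" by (simp add: power_divide)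
  have "F (1/r) (kt * r) \<psi> = 1/8 * (LINT x:{0..1}|lborel. (gg x)^2) + 1/8 * (r^2 * (LINT x:{0..1}|lborel. (sin (\<psi> x))^2))
      - kt * r / 2 * (real n * pi)"
    unfolding F_split[OF h] I1 I2 rr by simp
  also have "\<dots> \<le> 1/8 * (LINT x:{0..1}|lborel. (gg x)^2) + 1/8 * (LINT x:{0..1}|lborel. (gg x)^2) - kt * r / 2 * (real n * pi)"
    using S by simp
  also have "\<dots> = 1/4 * (real n * (R0 \<gamma> T r \<tau> - R0 \<gamma> T r 0)) - kt * r / 2 * (real n * pi)"
    unfolding G2 by simp
  also have "\<dots> \<le> 1/4 * (real n * (2 * \<gamma>^2 * r)) - kt * r / 2 * (real n * pi)"
  proof -
    have "real n * (R0 \<gamma> T r \<tau> - R0 \<gamma> T r 0) \<le> real n * (2 * \<gamma>^2 * r)"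
      by (rule mult_left_mono[OF R]) simp
    then show ?thesis by (simp add: algebra_simps)
  qed
  also have "\<dots> = real n * r * (\<gamma>^2 - kt * pi) / 2" by (simp add: algebra_simps)
  finally show "F (1/r) (kt * r) (psiT \<gamma> T r (2*T/r) n) \<le> real n * r * (\<gamma>^2 - kt * pi) / 2"
    unfolding \<psi>_def \<tau>_def .
qed


lemma test_exists:
  assumes kt: "kt > 1/pi"
  shows "\<exists>c>0. \<exists>r0. \<forall>r \<ge> r0. \<exists>\<psi>\<in>J_class. F (1/r) (kt*r) \<psi> \<le> - c * r^2"
proof -
  have ktp: "kt * pi > 1" using kt pi_gt_zero by (simp add: divide_less_eq)
  define \<gamma> where "\<gamma> = sqrt ((1 + kt*pi)/2)"
  have g2: "\<gamma>^2 = (1 + kt*pi)/2" unfolding \<gamma>_def using ktp by simp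
  have g1: "\<gamma> > 1" unfolding \<gamma>_def using ktp by simp
  define \<theta> where "\<theta> = pi/(2*\<gamma>)"
  have th0: "0 < \<theta>" unfolding \<theta>_def using g1 by simp
  have th1: "\<theta> < pi/2" unfolding \<theta>_def using g1 pi_gt_zero by (simp add: divide_less_eq field_simps)
  define T where "T = arsinh (tan \<theta>)"
  have tp: "tan \<theta> > 0" by (rule tan_gt_zero) (use th0 th1 in simp_all)
  have Tp: "T > 0" unfolding T_def using tp by (simp add: arsinh_real_pos_iff)
  have at: "arctan (sinh T) = \<theta>" unfolding T_def sinh_arsinh_real
    by (rule arctan_tan) (use th0 th1 in simp_all)
  have g: "\<gamma> * arctan (sinh T) = pi/2" unfolding at \<theta>_def using g1 by simp
  define c where "c = (kt*pi - 1) / (16 * T)"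
  have cp: "c > 0" unfolding c_def using ktp Tp by simp
  show ?thesis
  proof (rule exI[of _ c], intro conjI cp, rule exI[of _ "4*T"], intro allI impI)
    fix r :: real assume r4: "r \<ge> 4*T"
    have r: "r > 0" using r4 Tp by simp
    define y where "y = r / (2*T)"
    have y2: "y \<ge> 2" unfolding y_def using r4 Tp by (simp add: field_simps)
    define n where "n = nat \<lfloor>y\<rfloor>"
    have fl: "real n = of_int \<lfloor>y\<rfloor>" unfolding n_def using y2 by simp
    have nle: "real n \<le> y" unfolding fl by simp
    have nge: "real n \<ge> y / 2" unfolding fl using y2 by linarith
    have n1: "real n * (2*T/r) \<le> 1"
    proof -
      have "real n * (2*T/r) \<le> y * (2*T/r)" by (rule mult_right_mono[OF nle]) (use Tp r in simp)
      also have "y * (2*T/r) = 1" unfolding y_def using Tp r by simp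
      finally show ?thesis .
    qed
    have "1 - kt*pi \<le> 0" using ktp by simp
    then have "r * (1 - kt*pi) \<le> 0" using r by (simp add: mult_nonneg_nonpos)
    then have rle: "r * (1 - kt*pi) / 4 \<le> 0" by simp
    note B = F_psiT_bound[OF less_imp_le[OF g1] g r Tp n1]
    have "F (1/r) (kt * r) (psiT \<gamma> T r (2*T/r) n) \<le> real n * r * (\<gamma>^2 - kt * pi) / 2" by (rule B(2))
    also have "\<dots> = real n * (r * (1 - kt*pi) / 4)" unfolding g2 by (simp add: field_simps)
    also have "\<dots> \<le> (y/2) * (r * (1 - kt*pi) / 4)"
      by (rule mult_right_mono_neg[OF nge rle])
    also have "\<dots> = - c * r^2" unfolding y_def c_def using Tp by (simp add: field_simps power2_eq_square)
    finally show "\<exists>\<psi>\<in>J_class. F (1/r) (kt*r) \<psi> \<le> - c * r^2" using B(1) by blast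
  qed
qed

lemma Eng_cong01:
  assumes c: "\<And>x. x \<in> {0..1} \<Longrightarrow> v x = w x"
  shows "Eng \<epsilon> v = Eng \<epsilon> w"
proof -
  have d: "wderiv01 v = wderiv01 w" by (rule wderiv01_cong(1)[OF c])
  have "(LINT x:{0..1}|lborel. (1 - (v x)^2)^2) = (LINT x:{0..1}|lborel. (1 - (w x)^2)^2)"
    by (rule set_int_cong01) (use c in simp_all)
  then show ?thesis unfolding Eng_def d by simp
qed

lemma main_det:
  fixes v \<phi> :: "real \<Rightarrow> real"
  assumes kd: "\<kappa> = kt * sqrt \<delta> / \<epsilon>" and md: "m = (INF \<psi>\<in>J_class. F (\<epsilon> / sqrt \<delta>) \<kappa> \<psi>)"
    and sd: "s = sqrt (16*kt^2*\<delta>/\<epsilon>)"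
    and e: "0 < \<epsilon>" "\<epsilon> \<le> 1" and d: "\<delta> > 0" and kt: "kt > 0"
    and adm: "admissible v \<phi>" and v0: "\<forall>x\<in>{0..1}. v x \<ge> 0"
    and mini: "\<forall>w \<psi>. admissible w \<psi> \<longrightarrow> G \<epsilon> \<delta> \<kappa> v \<phi> \<le> G \<epsilon> \<delta> \<kappa> w \<psi>"
    and hm: "m \<le> 0" and hs: "16*kt^2*\<delta>/\<epsilon> \<le> 1/64"
  shows "G \<epsilon> \<delta> \<kappa> v \<phi> \<le> m" "m - G \<epsilon> \<delta> \<kappa> v \<phi> \<le> 2 * s * \<kappa>^2"
    "m \<le> G \<epsilon> \<delta> \<kappa> (\<lambda>_. 1) \<phi>" "G \<epsilon> \<delta> \<kappa> (\<lambda>_. 1) \<phi> - m \<le> 4 * s * \<kappa>^2"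
    "2 * Eng \<epsilon> v \<le> 256 * \<epsilon> * \<kappa>^4" "\<kappa>^2 = kt^2 * \<delta> / \<epsilon>^2"
proof -
  have h: "H1_01 v" using adm unfolding admissible_def by blast
  have c: "continuous_on {0..1} v" by (rule wd01_cont[OF wd01_someI[OF h]])
  define vt where "vt = restr01 v"
  have vtm: "vt \<in> borel_measurable lborel" unfolding vt_def by (rule restr01_meas[OF c])
  have cg: "\<And>x. x \<in> {0..1} \<Longrightarrow> vt x = v x" unfolding vt_def restr01_def by simp
  have admt: "admissible vt \<phi>" using adm adm_cong01[OF cg] by simp
  have Gt: "G \<epsilon> \<delta> \<kappa> vt \<phi> = G \<epsilon> \<delta> \<kappa> v \<phi>" by (rule G_cong01[OF cg])
  have Et: "Eng \<epsilon> vt = Eng \<epsilon> v" by (rule Eng_cong01[OF cg])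
  define E where "E = Eng \<epsilon> v"
  have E0: "0 \<le> E" unfolding E_def by (rule Eng_nonneg)
  have mlow: "m \<ge> - (\<kappa>^2) / 2" unfolding md by (rule inf_lower)
  show Gm: "G \<epsilon> \<delta> \<kappa> v \<phi> \<le> m" unfolding md by (rule G_le_inf[OF e(1) d mini])
  have crude: "G \<epsilon> \<delta> \<kappa> v \<phi> \<ge> E - \<kappa>^2/2"
    using G_crude[OF admt vtm, of \<delta> \<epsilon> \<kappa>] d Gt Et unfolding E_def by simp
  have Ek: "E \<le> \<kappa>^2/2" using crude Gm hm by simp
  show k2: "\<kappa>^2 = kt^2 * \<delta> / \<epsilon>^2" unfolding kd using d by (simp add: power_divide power_mult_distrib)
  define \<eta> where "\<eta> = sqrt (32 * \<epsilon> * E)"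
  have eta0: "0 \<le> \<eta>" unfolding \<eta>_def using e E0 by simp
  have eta2: "\<eta>^2 = 32 * \<epsilon> * E" unfolding \<eta>_def using e E0 by simp
  have "32 * \<epsilon> * E \<le> 32 * \<epsilon> * (\<kappa>^2/2)" using Ek e by simp
  also have "\<dots> = 16*kt^2*\<delta>/\<epsilon>" unfolding k2 using e by (simp add: field_simps power2_eq_square)
  finally have "32 * \<epsilon> * E \<le> 16*kt^2*\<delta>/\<epsilon>" .
  then have etas: "\<eta> \<le> s" unfolding \<eta>_def sd by (rule real_sqrt_le_mono)
  have s8: "s \<le> 1/8"
  proof -
    have "s \<le> sqrt (1/64)" unfolding sd using hs by (rule real_sqrt_le_mono)
    also have "sqrt (1/64) = (1/8::real)" by (simp add: real_sqrt_divide)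
    finally show ?thesis .
  qed
  have vl: "\<forall>x\<in>{0..1}. 1 - \<eta> \<le> vt x"
  proof
    fix x :: real assume x: "x \<in> {0..1}"
    have "(v x - 1)^2 \<le> 32 * \<epsilon> * Eng \<epsilon> v" by (rule unif_bound[OF h v0 e x])
    then have "(v x - 1)^2 \<le> \<eta>^2" unfolding eta2 E_def .
    then have "\<bar>v x - 1\<bar> \<le> \<eta>" using eta0 by (simp add: abs_le_square_iff[symmetric])
    then show "1 - \<eta> \<le> vt x" using cg[OF x] by simp
  qed
  define l where "l = 1 - \<eta>"
  have l: "0 < l" "l \<le> 1" unfolding l_def using etas s8 eta0 by simp_all
  note fine = G_fine[OF admt vtm d e(1) l vl[folded l_def]]
  have FJ: "\<phi> \<in> J_class" by (rule fine(1))
  have G1: "G \<epsilon> \<delta> \<kappa> (\<lambda>_. 1) \<phi> = F (\<epsilon> / sqrt \<delta>) \<kappa> \<phi>" by (rule fine(2))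
  have Gf0: "G \<epsilon> \<delta> \<kappa> vt \<phi> \<ge> Eng \<epsilon> vt + l^4 * (F (\<epsilon> / sqrt \<delta>) \<kappa> \<phi> + \<kappa>^2/2) - \<kappa>^2/2"
    by (rule fine(3))
  have Gf: "G \<epsilon> \<delta> \<kappa> v \<phi> \<ge> E + l^4 * (F (\<epsilon> / sqrt \<delta>) \<kappa> \<phi> + \<kappa>^2/2) - \<kappa>^2/2"
    using Gf0 unfolding Gt Et E_def .
  define lam where "lam = l^4"
  have lam1: "1 - 4*\<eta> \<le> lam"
    using Bernoulli_inequality[of "-\<eta>" 4] eta0 etas s8 unfolding lam_def l_def by simp
  have lam2: "lam \<le> 1" unfolding lam_def using l by (simp add: power_le_one)
  have lamh: "lam \<ge> 1/2" using lam1 etas s8 by simp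
  define Fp where "Fp = F (\<epsilon> / sqrt \<delta>) \<kappa> \<phi>"
  have Fm: "m \<le> Fp" unfolding md Fp_def by (rule inf_le[OF FJ])
  define M where "M = m + \<kappa>^2/2"
  have M0: "0 \<le> M" "M \<le> \<kappa>^2/2" unfolding M_def using mlow hm by simp_all
  have Gf2: "G \<epsilon> \<delta> \<kappa> v \<phi> + \<kappa>^2/2 \<ge> E + lam * (Fp + \<kappa>^2/2)" using Gf unfolding lam_def Fp_def by simp
  have lamM: "lam * M \<le> lam * (Fp + \<kappa>^2/2)" unfolding M_def using Fm lamh by (intro mult_left_mono) simp_all
  have oneM: "(1 - lam) * M \<le> 4 * \<eta> * (\<kappa>^2/2)"
    by (rule mult_mono) (use lam1 M0 eta0 in simp_all)
  have k0: "0 \<le> \<kappa>^2" by simp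
  show "m - G \<epsilon> \<delta> \<kappa> v \<phi> \<le> 2 * s * \<kappa>^2"
  proof -
    have a1: "G \<epsilon> \<delta> \<kappa> v \<phi> + \<kappa>^2/2 \<ge> lam * M" using Gf2 lamM E0 by linarith
    have a2: "m = M - \<kappa>^2/2" unfolding M_def by simp
    have "m - G \<epsilon> \<delta> \<kappa> v \<phi> \<le> M - lam * M" using a1 a2 by linarith
    also have "\<dots> = (1 - lam) * M" by (simp add: algebra_simps)
    finally have "m - G \<epsilon> \<delta> \<kappa> v \<phi> \<le> (1 - lam) * M" .
    also have "\<dots> \<le> 4 * \<eta> * (\<kappa>^2/2)" by (rule oneM)
    also have "\<dots> \<le> 4 * s * (\<kappa>^2/2)" using etas k0 by (intro mult_right_mono) simp_all
    finally show ?thesis by simp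
  qed
  show "m \<le> G \<epsilon> \<delta> \<kappa> (\<lambda>_. 1) \<phi>" using Fm G1 Fp_def by simp
  show "G \<epsilon> \<delta> \<kappa> (\<lambda>_. 1) \<phi> - m \<le> 4 * s * \<kappa>^2"
  proof -
    have a2: "m = M - \<kappa>^2/2" unfolding M_def by simp
    have A: "lam * (Fp + \<kappa>^2/2) \<le> M" using Gf2 Gm E0 a2 by linarith
    have "lam * (Fp - m) = lam * (Fp + \<kappa>^2/2) - lam * M" unfolding M_def by (simp add: algebra_simps)
    also have "\<dots> \<le> M - lam * M" using A by simp
    also have "\<dots> = (1 - lam) * M" by (simp add: algebra_simps)
    also have "\<dots> \<le> 4 * \<eta> * (\<kappa>^2/2)" by (rule oneM)
    finally have B: "lam * (Fp - m) \<le> 2 * \<eta> * \<kappa>^2" by simp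
    have "(1/2) * (Fp - m) \<le> lam * (Fp - m)" using lamh Fm by (intro mult_right_mono) simp_all
    then have "(1/2) * (Fp - m) \<le> 2 * \<eta> * \<kappa>^2" using B by simp
    then have "Fp - m \<le> 4 * \<eta> * \<kappa>^2" by simp
    also have "\<dots> \<le> 4 * s * \<kappa>^2" using etas k0 by (intro mult_right_mono) simp_all
    finally show ?thesis using G1 Fp_def by simp
  qed
  show "2 * Eng \<epsilon> v \<le> 256 * \<epsilon> * \<kappa>^4"
  proof -
    have a2: "m = M - \<kappa>^2/2" unfolding M_def by simp
    have "E \<le> M - lam * M" using Gf2 Gm lamM a2 by linarith
    also have "\<dots> = (1 - lam) * M" by (simp add: algebra_simps)
    finally have "E \<le> (1 - lam) * M" .
    also have "\<dots> \<le> 4 * \<eta> * (\<kappa>^2/2)" by (rule oneM)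
    finally have E1: "E \<le> 2 * \<eta> * \<kappa>^2" by simp
    have "E^2 \<le> (2 * \<eta> * \<kappa>^2)^2" by (rule power_mono[OF E1 E0])
    also have "\<dots> = 4 * \<eta>^2 * \<kappa>^4" by (simp add: power_mult_distrib power2_eq_square power4_eq_xxxx)
    also have "\<dots> = E * (128 * \<epsilon> * \<kappa>^4)" unfolding eta2 by (simp add: algebra_simps)
    finally have E2: "E * E \<le> E * (128 * \<epsilon> * \<kappa>^4)" by (simp add: power2_eq_square)
    have "E \<le> 128 * \<epsilon> * \<kappa>^4"
    proof (cases "E = 0")
      case True then show ?thesis using e by simp
    next
      case False
      then have "E > 0" using E0 by simp
      then show ?thesis using E2 by (simp add: mult_le_cancel_left_pos)
    qed
    then show ?thesis unfolding E_def by simp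
  qed
qed

lemma abstract12:
  fixes Gv G1 m s k :: "real \<Rightarrow> real"
  assumes c: "c > 0"
    and s0: "\<And>e. e > 0 \<Longrightarrow> eventually (\<lambda>x. s x \<le> e) FF"
    and ev: "eventually (\<lambda>x. Gv x \<le> m x \<and> m x - Gv x \<le> 2 * s x * k x \<and> m x \<le> G1 x
       \<and> G1 x - m x \<le> 4 * s x * k x \<and> m x \<le> - c * k x \<and> 0 \<le> k x) FF"
  shows "(\<lambda>x. Gv x - G1 x) \<in> o[FF](G1)" "(\<lambda>x. Gv x - m x) \<in> o[FF](m)"
proof -
  show "(\<lambda>x. Gv x - m x) \<in> o[FF](m)"
  proof (rule landau_o.smallI)
    fix C :: real assume C: "C > 0"
    have "eventually (\<lambda>x. s x \<le> C * c / 2) FF" by (rule s0) (use C c in simp)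
    then show "eventually (\<lambda>x. norm (Gv x - m x) \<le> C * norm (m x)) FF"
      using ev
    proof eventually_elim
      case (elim x)
      then have k0: "0 \<le> k x" by simp
      have "norm (Gv x - m x) = m x - Gv x" using elim by simp
      also have "\<dots> \<le> 2 * s x * k x" using elim by simp
      also have "\<dots> \<le> 2 * (C * c / 2) * k x" using elim k0 by (intro mult_right_mono) simp_all
      also have "\<dots> = C * (c * k x)" by simp
      also have "\<dots> \<le> C * norm (m x)" using elim C by (intro mult_left_mono) auto
      finally show ?case .
    qed
  qed
  show "(\<lambda>x. Gv x - G1 x) \<in> o[FF](G1)"
  proof (rule landau_o.smallI)
    fix C :: real assume C: "C > 0"
    have "eventually (\<lambda>x. s x \<le> min (c / 8) (C * c / 12)) FF" by (rule s0) (use C c in simp)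
    then show "eventually (\<lambda>x. norm (Gv x - G1 x) \<le> C * norm (G1 x)) FF"
      using ev
    proof eventually_elim
      case (elim x)
      then have k0: "0 \<le> k x" and s1: "s x \<le> c/8" and s2: "s x \<le> C * c / 12" by simp_all
      have a: "norm (Gv x - G1 x) \<le> 6 * s x * k x" using elim by simp
      have "4 * s x * k x \<le> 4 * (c/8) * k x" using s1 k0 by (intro mult_right_mono) simp_all
      then have b: "c * k x / 2 \<le> norm (G1 x)" using elim by simp
      have "6 * s x * k x \<le> 6 * (C * c / 12) * k x" using s2 k0 by (intro mult_right_mono) simp_all
      also have "\<dots> = C * (c * k x / 2)" by simp
      also have "\<dots> \<le> C * norm (G1 x)" using b C by (intro mult_left_mono) simp_all
      finally show ?case using a by simp
    qed
  qed
qed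

lemma claim3_num:
  assumes e: "0 < \<epsilon>" "\<epsilon> \<le> 1" and d: "0 < \<delta>" and K: "K > 0" and dK: "\<delta> \<le> K * \<epsilon> powr (3/2)"
  shows "\<delta>^2 / \<epsilon>^3 \<le> K powr (3/2) * (sqrt \<delta> / \<epsilon>)"
proof -
  have a: "\<delta> powr (3/2) \<le> (K * \<epsilon> powr (3/2)) powr (3/2)"
    by (rule powr_mono2) (use dK d in simp_all)
  also have "\<dots> = K powr (3/2) * \<epsilon> powr (9/4)"
    using K e by (simp add: powr_mult powr_powr)
  also have "\<dots> \<le> K powr (3/2) * \<epsilon> powr 2"
    by (intro mult_left_mono powr_mono') (use e in simp_all)
  also have "\<epsilon> powr 2 = \<epsilon>^2" using e by (simp add: powr_realpow)
  finally have b: "\<delta> powr (3/2) \<le> K powr (3/2) * \<epsilon>^2" .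
  have c: "\<delta>^2 = sqrt \<delta> * \<delta> powr (3/2)"
  proof -
    have "sqrt \<delta> * \<delta> powr (3/2) = \<delta> powr (1/2) * \<delta> powr (3/2)" using d by (simp add: powr_half_sqrt)
    also have "\<dots> = \<delta> powr 2" using d by (simp add: powr_add[symmetric])
    also have "\<dots> = \<delta>^2" using d by (simp add: powr_realpow)
    finally show ?thesis by simp
  qed
  have "\<delta>^2 / \<epsilon>^3 = sqrt \<delta> * \<delta> powr (3/2) / \<epsilon>^3" unfolding c ..
  also have "\<dots> \<le> sqrt \<delta> * (K powr (3/2) * \<epsilon>^2) / \<epsilon>^3"
    using b d e by (intro divide_right_mono mult_left_mono) simp_all
  also have "\<dots> = K powr (3/2) * (sqrt \<delta> / \<epsilon>)" using e by (simp add: field_simps power2_eq_square power3_eq_cube)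
  finally show ?thesis .
qed

theorem proposition18:
  fixes \<delta> :: "real \<Rightarrow> real" and \<kappa>t :: real
    and v \<phi> :: "real \<Rightarrow> real \<Rightarrow> real"
  assumes kt: "\<kappa>t > 1 / pi"
    and dpos: "\<forall>\<^sub>F \<epsilon> in at_right 0. \<delta> \<epsilon> > 0"
    and d1: "(\<lambda>\<epsilon>. \<epsilon>^2) \<in> o[at_right 0](\<delta>)"
    and d2: "\<delta> \<in> o[at_right 0](\<lambda>\<epsilon>. \<epsilon>)"
    and mini: "\<forall>\<^sub>F \<epsilon> in at_right 0.
        admissible (v \<epsilon>) (\<phi> \<epsilon>) \<and> (\<forall>x\<in>{0..1}. v \<epsilon> x \<ge> 0) \<and>
        (\<forall>w \<psi>. admissible w \<psi> \<longrightarrow>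
           G \<epsilon> (\<delta> \<epsilon>) (\<kappa>t * sqrt (\<delta> \<epsilon>) / \<epsilon>) (v \<epsilon>) (\<phi> \<epsilon>)
             \<le> G \<epsilon> (\<delta> \<epsilon>) (\<kappa>t * sqrt (\<delta> \<epsilon>) / \<epsilon>) w \<psi>)"
  shows "((\<lambda>\<epsilon>. G \<epsilon> (\<delta> \<epsilon>) (\<kappa>t * sqrt (\<delta> \<epsilon>) / \<epsilon>) (v \<epsilon>) (\<phi> \<epsilon>)
              - G \<epsilon> (\<delta> \<epsilon>) (\<kappa>t * sqrt (\<delta> \<epsilon>) / \<epsilon>) (\<lambda>_. 1) (\<phi> \<epsilon>))
           \<in> o[at_right 0](\<lambda>\<epsilon>. G \<epsilon> (\<delta> \<epsilon>) (\<kappa>t * sqrt (\<delta> \<epsilon>) / \<epsilon>) (\<lambda>_. 1) (\<phi> \<epsilon>)))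
     \<and> ((\<lambda>\<epsilon>. G \<epsilon> (\<delta> \<epsilon>) (\<kappa>t * sqrt (\<delta> \<epsilon>) / \<epsilon>) (v \<epsilon>) (\<phi> \<epsilon>)
              - (INF \<psi>\<in>J_class. F (\<epsilon> / sqrt (\<delta> \<epsilon>)) (\<kappa>t * sqrt (\<delta> \<epsilon>) / \<epsilon>) \<psi>))
           \<in> o[at_right 0](\<lambda>\<epsilon>. INF \<psi>\<in>J_class. F (\<epsilon> / sqrt (\<delta> \<epsilon>)) (\<kappa>t * sqrt (\<delta> \<epsilon>) / \<epsilon>) \<psi>))
     \<and> (\<delta> \<in> O[at_right 0](\<lambda>\<epsilon>. \<epsilon> powr (3/2)) \<longrightarrow>
         (\<lambda>\<epsilon>. (LINT x:{0..1}|lborel. (wderiv01 (v \<epsilon>) x)^2)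
               + 1/(4*\<epsilon>^2) * (LINT x:{0..1}|lborel. ((v \<epsilon> x)^2 - 1)^2))
           \<in> O[at_right 0](\<lambda>\<epsilon>. sqrt (\<delta> \<epsilon>) / \<epsilon>))"
proof -
  have ktpos: "\<kappa>t > 0" using kt pi_gt_zero by (metis divide_pos_pos less_trans zero_less_one)
  obtain c0 r0 where c0: "c0 > 0" and T0: "\<And>r. r \<ge> r0 \<Longrightarrow> \<exists>\<psi>\<in>J_class. F (1/r) (\<kappa>t*r) \<psi> \<le> - c0 * r^2"
    using test_exists[OF kt] by blast
  have epos: "eventually (\<lambda>\<epsilon>::real. 0 < \<epsilon> \<and> \<epsilon> \<le> 1) (at_right 0)"
    unfolding eventually_at_right_field by (intro exI[of _ 1]) auto
  have ssmall: "eventually (\<lambda>\<epsilon>. sqrt (16*\<kappa>t^2*\<delta> \<epsilon>/\<epsilon>) \<le> e) (at_right 0)" if e: "e > 0" for e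
  proof -
    have "eventually (\<lambda>\<epsilon>. norm (\<delta> \<epsilon>) \<le> (e^2/(16*\<kappa>t^2)) * norm \<epsilon>) (at_right 0)"
      by (rule landau_o.smallD[OF d2]) (use e ktpos in simp)
    then show ?thesis using epos
    proof eventually_elim
      case (elim \<epsilon>)
      then have ep: "\<epsilon> > 0" by simp
      have "\<delta> \<epsilon> \<le> (e^2/(16*\<kappa>t^2)) * \<epsilon>" using elim by auto
      then have "16*\<kappa>t^2*\<delta> \<epsilon> \<le> e^2 * \<epsilon>" using ktpos by (simp add: field_simps)
      then have "16*\<kappa>t^2*\<delta> \<epsilon>/\<epsilon> \<le> e^2" using ep by (simp add: divide_le_eq)
      then have "sqrt (16*\<kappa>t^2*\<delta> \<epsilon>/\<epsilon>) \<le> sqrt (e^2)" by (rule real_sqrt_le_mono)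
      then show ?case using e by simp
    qed
  qed
  have hs: "eventually (\<lambda>\<epsilon>. 16*\<kappa>t^2*\<delta> \<epsilon>/\<epsilon> \<le> 1/64) (at_right 0)"
  proof -
    have "eventually (\<lambda>\<epsilon>. sqrt (16*\<kappa>t^2*\<delta> \<epsilon>/\<epsilon>) \<le> 1/8) (at_right 0)" by (rule ssmall) simp
    then show ?thesis
    proof eventually_elim
      case (elim \<epsilon>)
      show ?case
      proof (cases "16*\<kappa>t^2*\<delta> \<epsilon>/\<epsilon> \<le> 0")
        case False
        then have "(sqrt (16*\<kappa>t^2*\<delta> \<epsilon>/\<epsilon>))^2 \<le> (1/8)^2"
          using elim by (intro power_mono) simp_all
        then show ?thesis using False by (simp add: power_divide)
      qed simp
    qed
  qed
  define R where "R = max r0 1"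
  have R: "R > 0" "R \<ge> r0" unfolding R_def by simp_all
  have rbig: "eventually (\<lambda>\<epsilon>. sqrt (\<delta> \<epsilon>) / \<epsilon> \<ge> r0) (at_right 0)"
  proof -
    have "eventually (\<lambda>\<epsilon>. norm (\<epsilon>^2) \<le> (1/R^2) * norm (\<delta> \<epsilon>)) (at_right 0)"
      by (rule landau_o.smallD[OF d1]) (use R in simp)
    then show ?thesis using epos dpos
    proof eventually_elim
      case (elim \<epsilon>)
      then have ep: "\<epsilon> > 0" and dp: "\<delta> \<epsilon> > 0" by simp_all
      have "\<epsilon>^2 \<le> (1/R^2) * \<delta> \<epsilon>" using elim dp by simp
      then have "R^2 \<le> \<delta> \<epsilon> / \<epsilon>^2" using R ep by (simp add: field_simps)
      then have "sqrt (R^2) \<le> sqrt (\<delta> \<epsilon> / \<epsilon>^2)" by (rule real_sqrt_le_mono)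
      then have "R \<le> sqrt (\<delta> \<epsilon>) / \<epsilon>" using R ep by (simp add: real_sqrt_divide)
      then show ?case using R by simp
    qed
  qed
  define k where "k \<epsilon> = (\<kappa>t * sqrt (\<delta> \<epsilon>) / \<epsilon>)^2" for \<epsilon>
  define s where "s \<epsilon> = sqrt (16*\<kappa>t^2*\<delta> \<epsilon>/\<epsilon>)" for \<epsilon>
  define m where "m \<epsilon> = (INF \<psi>\<in>J_class. F (\<epsilon> / sqrt (\<delta> \<epsilon>)) (\<kappa>t * sqrt (\<delta> \<epsilon>) / \<epsilon>) \<psi>)" for \<epsilon>
  define Gv where "Gv \<epsilon> = G \<epsilon> (\<delta> \<epsilon>) (\<kappa>t * sqrt (\<delta> \<epsilon>) / \<epsilon>) (v \<epsilon>) (\<phi> \<epsilon>)" for \<epsilon>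
  define G1 where "G1 \<epsilon> = G \<epsilon> (\<delta> \<epsilon>) (\<kappa>t * sqrt (\<delta> \<epsilon>) / \<epsilon>) (\<lambda>_. 1) (\<phi> \<epsilon>)" for \<epsilon>
  have main: "eventually (\<lambda>\<epsilon>. Gv \<epsilon> \<le> m \<epsilon> \<and> m \<epsilon> - Gv \<epsilon> \<le> 2 * s \<epsilon> * k \<epsilon> \<and> m \<epsilon> \<le> G1 \<epsilon>
       \<and> G1 \<epsilon> - m \<epsilon> \<le> 4 * s \<epsilon> * k \<epsilon> \<and> m \<epsilon> \<le> - (c0/\<kappa>t^2) * k \<epsilon> \<and> 0 \<le> k \<epsilon>
       \<and> 2 * Eng \<epsilon> (v \<epsilon>) \<le> 256 * \<epsilon> * (k \<epsilon>)^2 \<and> k \<epsilon> = \<kappa>t^2 * \<delta> \<epsilon> / \<epsilon>^2 \<and> 0 < \<epsilon> \<and> \<epsilon> \<le> 1 \<and> 0 < \<delta> \<epsilon>) (at_right 0)"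
    using epos dpos mini hs rbig
  proof eventually_elim
    case (elim \<epsilon>)
    then have e: "0 < \<epsilon>" "\<epsilon> \<le> 1" and d: "\<delta> \<epsilon> > 0"
      and adm: "admissible (v \<epsilon>) (\<phi> \<epsilon>)" and v0: "\<forall>x\<in>{0..1}. v \<epsilon> x \<ge> 0"
      and mi: "\<forall>w \<psi>. admissible w \<psi> \<longrightarrow> G \<epsilon> (\<delta> \<epsilon>) (\<kappa>t * sqrt (\<delta> \<epsilon>) / \<epsilon>) (v \<epsilon>) (\<phi> \<epsilon>)
             \<le> G \<epsilon> (\<delta> \<epsilon>) (\<kappa>t * sqrt (\<delta> \<epsilon>) / \<epsilon>) w \<psi>"
      and h64: "16*\<kappa>t^2*\<delta> \<epsilon>/\<epsilon> \<le> 1/64" and rb: "sqrt (\<delta> \<epsilon>) / \<epsilon> \<ge> r0"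
      by simp_all
    define r where "r = sqrt (\<delta> \<epsilon>) / \<epsilon>"
    have rp: "r > 0" unfolding r_def using e d by simp
    obtain \<psi> where \<psi>: "\<psi> \<in> J_class" and F\<psi>: "F (1/r) (\<kappa>t*r) \<psi> \<le> - c0 * r^2"
      using T0[of r] rb unfolding r_def by blast
    have e1: "1/r = \<epsilon> / sqrt (\<delta> \<epsilon>)" unfolding r_def by simp
    have e2: "\<kappa>t*r = \<kappa>t * sqrt (\<delta> \<epsilon>) / \<epsilon>" unfolding r_def by simp
    have r2: "r^2 = \<delta> \<epsilon> / \<epsilon>^2" unfolding r_def using d by (simp add: power_divide)
    have kk: "k \<epsilon> = \<kappa>t^2 * r^2" unfolding k_def r_def by (simp add: power_mult_distrib power_divide)
    have mle: "m \<epsilon> \<le> - c0 * r^2"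
      using inf_le[OF \<psi>, of "\<epsilon> / sqrt (\<delta> \<epsilon>)" "\<kappa>t * sqrt (\<delta> \<epsilon>) / \<epsilon>"] F\<psi> unfolding m_def e1 e2 by simp
    have mk: "m \<epsilon> \<le> - (c0/\<kappa>t^2) * k \<epsilon>" using mle ktpos unfolding kk by simp
    have "0 \<le> c0 * r^2" using c0 by simp
    then have hm: "m \<epsilon> \<le> 0" using mle by linarith
    note D = main_det[OF refl m_def[of \<epsilon>] s_def[of \<epsilon>] e d ktpos adm v0 mi hm h64]
    have k4: "(k \<epsilon>)^2 = (\<kappa>t * sqrt (\<delta> \<epsilon>) / \<epsilon>)^4" unfolding k_def by (simp flip: power_mult)
    have Ek: "2 * Eng \<epsilon> (v \<epsilon>) \<le> 256 * \<epsilon> * (k \<epsilon>)^2" using D(5) unfolding k4 .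
    have k0: "0 \<le> k \<epsilon>" unfolding k_def by simp
    show ?case
      using D(1,2,3,4) mk e d Ek k0 D(6)[folded k_def] unfolding Gv_def G1_def k_def[symmetric] by simp
  qed
  have C12: "(\<lambda>\<epsilon>. Gv \<epsilon> - G1 \<epsilon>) \<in> o[at_right 0](G1)" "(\<lambda>\<epsilon>. Gv \<epsilon> - m \<epsilon>) \<in> o[at_right 0](m)"
  proof -
    have cc: "c0/\<kappa>t^2 > 0" using c0 ktpos by simp
    have s0: "\<And>e. e > 0 \<Longrightarrow> eventually (\<lambda>x. s x \<le> e) (at_right 0)" unfolding s_def by (rule ssmall)
    have ev: "eventually (\<lambda>x. Gv x \<le> m x \<and> m x - Gv x \<le> 2 * s x * k x \<and> m x \<le> G1 x
       \<and> G1 x - m x \<le> 4 * s x * k x \<and> m x \<le> - (c0/\<kappa>t^2) * k x \<and> 0 \<le> k x) (at_right 0)"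
      by (rule eventually_mono[OF main]) blast
    show "(\<lambda>\<epsilon>. Gv \<epsilon> - G1 \<epsilon>) \<in> o[at_right 0](G1)" by (rule abstract12(1)[OF cc s0 ev])
    show "(\<lambda>\<epsilon>. Gv \<epsilon> - m \<epsilon>) \<in> o[at_right 0](m)" by (rule abstract12(2)[OF cc s0 ev])
  qed
  have C3: "(\<lambda>\<epsilon>. (LINT x:{0..1}|lborel. (wderiv01 (v \<epsilon>) x)^2)
               + 1/(4*\<epsilon>^2) * (LINT x:{0..1}|lborel. ((v \<epsilon> x)^2 - 1)^2))
           \<in> O[at_right 0](\<lambda>\<epsilon>. sqrt (\<delta> \<epsilon>) / \<epsilon>)" if hO: "\<delta> \<in> O[at_right 0](\<lambda>\<epsilon>. \<epsilon> powr (3/2))"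
  proof -
    obtain K where K: "K > 0" and evK: "eventually (\<lambda>\<epsilon>. norm (\<delta> \<epsilon>) \<le> K * norm (\<epsilon> powr (3/2))) (at_right 0)"
      using landau_o.bigE[OF hO] by blast
    show ?thesis
    proof (rule landau_o.bigI[of "256 * \<kappa>t^4 * K powr (3/2)"])
      show "0 < 256 * \<kappa>t^4 * K powr (3/2)" using K ktpos by simp
      show "eventually (\<lambda>\<epsilon>. norm ((LINT x:{0..1}|lborel. (wderiv01 (v \<epsilon>) x)^2)
               + 1/(4*\<epsilon>^2) * (LINT x:{0..1}|lborel. ((v \<epsilon> x)^2 - 1)^2))
            \<le> (256 * \<kappa>t^4 * K powr (3/2)) * norm (sqrt (\<delta> \<epsilon>) / \<epsilon>)) (at_right 0)"
        using main evK
      proof eventually_elim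
        case (elim \<epsilon>)
        then have e: "0 < \<epsilon>" "\<epsilon> \<le> 1" and d: "\<delta> \<epsilon> > 0"
          and E2: "2 * Eng \<epsilon> (v \<epsilon>) \<le> 256 * \<epsilon> * (k \<epsilon>)^2" and kd: "k \<epsilon> = \<kappa>t^2 * \<delta> \<epsilon> / \<epsilon>^2"
          by blast+
        have dK: "\<delta> \<epsilon> \<le> K * \<epsilon> powr (3/2)" using elim e d by simp
        define A where "A = (LINT x:{0..1}|lborel. (wderiv01 (v \<epsilon>) x)^2)"
        define B where "B = (LINT x:{0..1}|lborel. (1 - (v \<epsilon> x)^2)^2)"
        have B': "(LINT x:{0..1}|lborel. ((v \<epsilon> x)^2 - 1)^2) = B" unfolding B_def by (simp add: power2_commute)
        have A0: "0 \<le> A" and B0: "0 \<le> B" unfolding A_def B_def by (rule Eng_parts)+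
        have Q0: "0 \<le> A + 1/(4*\<epsilon>^2) * B" using A0 B0 by simp
        have "A + 1/(4*\<epsilon>^2) * B \<le> 2 * Eng \<epsilon> (v \<epsilon>)"
          unfolding Eng_def A_def[symmetric] B_def[symmetric] using A0 B0 e by (simp add: field_simps)
        also have "\<dots> \<le> 256 * \<epsilon> * (k \<epsilon>)^2" by (rule E2)
        also have "\<dots> = 256 * \<kappa>t^4 * (\<delta> \<epsilon>^2 / \<epsilon>^3)" unfolding kd using e
          by (simp add: field_simps power2_eq_square power3_eq_cube power4_eq_xxxx)
        also have "\<dots> \<le> 256 * \<kappa>t^4 * (K powr (3/2) * (sqrt (\<delta> \<epsilon>) / \<epsilon>))"
          by (intro mult_left_mono claim3_num[OF e d K dK]) simp
        finally show ?case using Q0 e d unfolding B' A_def[symmetric] by (simp add: mult.assoc)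
      qed
    qed
  qed
  show ?thesis using C12 C3 unfolding Gv_def G1_def m_def by blast
qed

end
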